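(* Let $(\mathcal A,\mathbb E)$ be a $B$-valued probability space and $a,b\in\mathcal A$ free. Let $n\ge1$ and let $\tau\in Y_{2n}$ be a tree that does not split. Then for all $x_1,y_1,\dots,x_n,y_n\in B$, $$\kappa_\tau(x_1a,\,y_1b,\,x_2a,\,y_2b,\,\dots,\,x_na,\,y_nb)=0.$$
   Context: $B$ is a unital algebra over a field $\mathbb K$ of characteristic zero. $B$-valued probability space $(\mathcal A,\mathbb E)$: $\mathcal A$ a unital $\mathbb K$-algebra and $B$-bimodule with all mixed triple products associative; $\mathbb E:\mathcal A\to B$ linear, unital, $\mathbb E(xay)=x\mathbb E(a)y$. Freeness of $a,b$: for the $B$-subalgebras $\mathcal A_1,\mathcal A_2$ they generate, $\mathbb E(a_1\cdots a_n)=0$ whenever $n\ge1$, each $\mathbb E(a_i)=0$, $a_i\in\mathcal A_{j_i}$, $j_i\neq j_{i+1}$. Planar binary trees: $Y_0=\{|\}$, $Y_n=\{\sigma\vee\tau:|\sigma|+|\tau|=n-1\}$ ($\sigma\vee\tau$: root with left subtree $\sigma$, right subtree $\tau$); vertices numbered $1,\dots,n$ in left-to-right order (left subtree, root, right subtree). Each $\tau\in Y_n$, $n\ge1$, is uniquely $\tau_1\vee(\tau_2\vee(\cdots\vee(\tau_k\vee|)))$; $j_i=|\tau_1|+\dots+|\tau_i|+i$. A right arm is a class of the equivalence relation generated by "$x$ is the right child of $y$"; $\tau$ splits if every right arm consists of numbers of the same parity. Cumulants: multilinear $\kappa_n:\mathcal A^n\to B$ defined recursively by $\mathbb E(a_1\cdots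 a_n)=\sum_{\tau\in Y_n}\kappa_\tau(a_1,\dots,a_n)$, with $\kappa_|=1$ and $\kappa_\tau(a_1,\dots,a_n)=\kappa_k(\kappa_{\tau_1}(a_1,\dots,a_{j_1-1})a_{j_1},\dots,\kappa_{\tau_k}(a_{j_{k-1}+1},\dots,a_{j_k-1})a_{j_k})$. *)

theory Defs
  imports Main "HOL.Vector_Spaces"
begin

definition k_algebra :: "('k::field_char_0 \<Rightarrow> 'r::ring_1 \<Rightarrow> 'r) \<Rightarrow> bool" where
  "k_algebra sm \<longleftrightarrow> vector_space sm \<and>
     (\<forall>c x y. sm c (x * y) = sm c x * y \<and> sm c (x * y) = x * sm c y)"

text \<open>B is the type 'b with scalar action smB;
A is the type 'a with scalar action smA; lact x a = x a and ract a x = a x are the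
bimodule actions; E is the conditional expectation.\<close>
definition B_prob_space ::
  "('k::field_char_0 \<Rightarrow> 'b::ring_1 \<Rightarrow> 'b) \<Rightarrow> ('k \<Rightarrow> 'a::ring_1 \<Rightarrow> 'a) \<Rightarrow>
   ('b \<Rightarrow> 'a \<Rightarrow> 'a) \<Rightarrow> ('a \<Rightarrow> 'b \<Rightarrow> 'a) \<Rightarrow> ('a \<Rightarrow> 'b) \<Rightarrow> bool" where
  "B_prob_space smB smA lact ract E \<longleftrightarrow>
     k_algebra smB \<and> k_algebra smA \<and>
     \<comment> \<open>unital K-bimodule structure\<close>
     (\<forall>x a b. lact x (a + b) = lact x a + lact x b) \<and>
     (\<forall>x y a. lact (x + y) a = lact x a + lact y a) \<and>
     (\<forall>x a b. ract (a + b) x = ract a x + ract b x) \<and>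
     (\<forall>x y a. ract a (x + y) = ract a x + ract a y) \<and>
     (\<forall>c x a. lact (smB c x) a = smA c (lact x a) \<and> lact x (smA c a) = smA c (lact x a)) \<and>
     (\<forall>c x a. ract a (smB c x) = smA c (ract a x) \<and> ract (smA c a) x = smA c (ract a x)) \<and>
     (\<forall>a. lact 1 a = a) \<and> (\<forall>a. ract a 1 = a) \<and>
     \<comment> \<open>all mixed triple products associative\<close>
     (\<forall>x y a. lact (x * y) a = lact x (lact y a)) \<and>
     (\<forall>x y a. ract a (x * y) = ract (ract a x) y) \<and>
     (\<forall>x y a. lact x (ract a y) = ract (lact x a) y) \<and>
     (\<forall>x a b. lact x (a * b) = lact x a * b) \<and>
     (\<forall>x a b. ract (a * b) x = a * ract b x) \<and>
     (\<forall>x a b. ract a x * b = a * lact x b) \<and>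
     \<comment> \<open>the expectation\<close>
     (\<forall>a b. E (a + b) = E a + E b) \<and>
     (\<forall>c a. E (smA c a) = smB c (E a)) \<and>
     E 1 = 1 \<and>
     (\<forall>x a y. E (lact x (ract a y)) = x * E a * y)"

inductive_set B_gen ::
  "('k \<Rightarrow> 'a::ring_1 \<Rightarrow> 'a) \<Rightarrow> ('b \<Rightarrow> 'a \<Rightarrow> 'a) \<Rightarrow> ('a \<Rightarrow> 'b \<Rightarrow> 'a) \<Rightarrow> 'a \<Rightarrow> 'a set"
  for smA lact ract a where
    gen_elem: "a \<in> B_gen smA lact ract a"
  | gen_one: "1 \<in> B_gen smA lact ract a"
  | gen_add: "u \<in> B_gen smA lact ract a \<Longrightarrow> v \<in> B_gen smA lact ract a \<Longrightarrow> u + v \<in> B_gen smA lact ract a"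
  | gen_mult: "u \<in> B_gen smA lact ract a \<Longrightarrow> v \<in> B_gen smA lact ract a \<Longrightarrow> u * v \<in> B_gen smA lact ract a"
  | gen_scale: "u \<in> B_gen smA lact ract a \<Longrightarrow> smA c u \<in> B_gen smA lact ract a"
  | gen_lact: "u \<in> B_gen smA lact ract a \<Longrightarrow> lact x u \<in> B_gen smA lact ract a"
  | gen_ract: "u \<in> B_gen smA lact ract a \<Longrightarrow> ract u x \<in> B_gen smA lact ract a"

definition free_pair ::
  "('k \<Rightarrow> 'a::ring_1 \<Rightarrow> 'a) \<Rightarrow> ('b \<Rightarrow> 'a \<Rightarrow> 'a) \<Rightarrow> ('a \<Rightarrow> 'b \<Rightarrow> 'a) \<Rightarrow> ('a \<Rightarrow> 'b::zero) \<Rightarrow>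
   'a \<Rightarrow> 'a \<Rightarrow> bool" where
  "free_pair smA lact ract E a b \<longleftrightarrow>
     (\<forall>w :: (bool \<times> 'a) list.
        w \<noteq> [] \<longrightarrow>
        (\<forall>(j, z) \<in> set w. E z = 0 \<and> z \<in> B_gen smA lact ract (if j then a else b)) \<longrightarrow>
        (\<forall>i. Suc i < length w \<longrightarrow> fst (w ! i) \<noteq> fst (w ! Suc i)) \<longrightarrow>
        E (prod_list (map snd w)) = 0)"

datatype ptree = Leaf | Node ptree ptree  \<comment> \<open>Node l r = l \<or> r\<close>

fun tsize :: "ptree \<Rightarrow> nat" where
  "tsize Leaf = 0"
| "tsize (Node l r) = tsize l + 1 + tsize r"

definition Y :: "nat \<Rightarrow> ptree set" where
  "Y n = {t. tsize t = n}"

text \<open>rchild off t x y: inside the tree t whose vertices are numbered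
off+1, ..., off + tsize t in left-to-right order (left subtree, root, right
subtree), vertex x is the right child of vertex y.\<close>
fun rchild :: "nat \<Rightarrow> ptree \<Rightarrow> nat \<Rightarrow> nat \<Rightarrow> bool" where
  "rchild off Leaf x y = False"
| "rchild off (Node l r) x y =
     ((case r of Leaf \<Rightarrow> False
       | Node rl rr \<Rightarrow> y = off + tsize l + 1 \<and> x = off + tsize l + 1 + tsize rl + 1)
      \<or> rchild off l x y \<or> rchild (off + tsize l + 1) r x y)"

text \<open>Right arms are the classes of the equivalence relation (on the vertex set
{1..n}) generated by "x is the right child of y"; t splits iff each right arm
consists of numbers of the same parity.\<close>
definition splits :: "ptree \<Rightarrow> bool" where
  "splits t \<longleftrightarrow>
     (\<forall>x \<in> {1..tsize t}. \<forall>y.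
        (sup (rchild 0 t) (rchild 0 t)\<inverse>\<inverse>)\<^sup>*\<^sup>* x y \<longrightarrow> (even x \<longleftrightarrow> even y))"

text \<open>For t = t_1 \<or> (t_2 \<or> (... \<or> (t_k \<or> |))), spine_args gives the list
  kappa_{t_1}(a_1,...,a_{j_1-1}) a_{j_1}, ..., kappa_{t_k}(...) a_{j_k},
with kappa_| = 1.\<close>
primrec spine_args :: "('b::one \<Rightarrow> 'a \<Rightarrow> 'a) \<Rightarrow> ('a list \<Rightarrow> 'b) \<Rightarrow> ptree \<Rightarrow> 'a list \<Rightarrow> 'a list" where
  "spine_args lact \<kappa> Leaf as = []"
| "spine_args lact \<kappa> (Node l r) as =
     lact (case l of Leaf \<Rightarrow> 1 | Node _ _ \<Rightarrow> \<kappa> (spine_args lact \<kappa> l (take (tsize l) as)))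
          (as ! tsize l)
     # spine_args lact \<kappa> r (drop (tsize l + 1) as)"

text \<open>kappa_t(a_1, ..., a_n), given the family of cumulants kappa (kappa applied to
a list of length k is kappa_k).\<close>
definition kappa_tree :: "('b::one \<Rightarrow> 'a \<Rightarrow> 'a) \<Rightarrow> ('a list \<Rightarrow> 'b) \<Rightarrow> ptree \<Rightarrow> 'a list \<Rightarrow> 'b" where
  "kappa_tree lact \<kappa> t as = (case t of Leaf \<Rightarrow> 1 | Node _ _ \<Rightarrow> \<kappa> (spine_args lact \<kappa> t as))"

definition is_cumulants :: "('b::ring_1 \<Rightarrow> 'a::ring_1 \<Rightarrow> 'a) \<Rightarrow> ('a \<Rightarrow> 'b) \<Rightarrow> ('a list \<Rightarrow> 'b) \<Rightarrow> bool" where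
  "is_cumulants lact E \<kappa> \<longleftrightarrow>
     (\<forall>as. E (prod_list as) = (\<Sum>t \<in> Y (length as). kappa_tree lact \<kappa> t as))"

end

theory Submission
  imports Defs
begin


section \<open>Sums over splittings\<close>

definition SS :: "('a list \<Rightarrow> 'a list \<Rightarrow> 'b::comm_monoid_add) \<Rightarrow> 'a list \<Rightarrow> 'b" where
  "SS f xs = (\<Sum>k\<le>length xs. f (take k xs) (drop k xs))"

lemma SS_Nil[simp]: "SS f [] = f [] []"
  by (simp add: SS_def)

lemma SS_Cons: "SS f (x # xs) = f [] (x # xs) + SS (\<lambda>a b. f (x # a) b) xs"
  unfolding SS_def by (simp add: sum.atMost_Suc_shift del: sum.atMost_Suc)

lemma SS_snoc: "SS f (xs @ [x]) = SS (\<lambda>a b. f a (b @ [x])) xs + f (xs @ [x]) []"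
  unfolding SS_def by (simp add: sum.atMost_Suc)

lemma SS_add: "SS (\<lambda>a b. f a b + g a b) xs = SS f xs + SS g xs"
  by (simp add: SS_def sum.distrib)
lemma SS_diff: "SS (\<lambda>a b. (f a b :: 'c::ab_group_add) - g a b) xs = SS f xs - SS g xs"
  by (simp add: SS_def sum_subtractf)
lemma SS_zero: "SS (\<lambda>a b. 0) xs = 0"
  by (simp add: SS_def)
lemma SS_cong: "(\<And>a b. xs = a @ b \<Longrightarrow> f a b = g a b) \<Longrightarrow> SS f xs = SS g xs"
  unfolding SS_def by (rule sum.cong) auto

lemma SS_assoc:
  "SS (\<lambda>A B. SS (\<lambda>A1 A2. f A1 A2 B) A) xs = SS (\<lambda>A1 R. SS (\<lambda>A2 B. f A1 A2 B) R) xs"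
proof (induction xs arbitrary: f)
  case Nil then show ?case by simp
next
  case (Cons x xs)
  have ih: "SS (\<lambda>a b. SS (\<lambda>A1 A2. f (x # A1) A2 b) a) xs = SS (\<lambda>a b. SS (\<lambda>A2 B. f (x # a) A2 B) b) xs"
    using Cons.IH[of "\<lambda>A1 A2 B. f (x # A1) A2 B"] .
  show ?case
    by (simp add: SS_Cons SS_add ih algebra_simps)
qed

lemma SS_hom:
  fixes h :: "'c::comm_monoid_add \<Rightarrow> 'd::ab_group_add"
  assumes "\<And>x y. h (x + y) = h x + h y"
  shows "h (SS f xs) = SS (\<lambda>a b. h (f a b)) xs"
proof -
  have h0: "h 0 = 0" using assms[of 0 0] by simp
  have "\<And>S. finite S \<Longrightarrow> h (\<Sum>k\<in>S. F k) = (\<Sum>k\<in>S. h (F k))" for F :: "nat \<Rightarrow> 'c"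
  proof -
    fix S :: "nat set" assume "finite S"
    then show "h (\<Sum>k\<in>S. F k) = (\<Sum>k\<in>S. h (F k))"
      by (induction S rule: finite_induct) (auto simp: h0 assms)
  qed
  then show ?thesis unfolding SS_def by simp
qed

definition Fst :: "('a list \<Rightarrow> 'a \<Rightarrow> 'a list \<Rightarrow> 'b::comm_monoid_add) \<Rightarrow> 'a list \<Rightarrow> 'b" where
  "Fst f xs = SS (\<lambda>A B. case B of [] \<Rightarrow> 0 | q # R \<Rightarrow> f A q R) xs"

lemma Fst_Nil[simp]: "Fst f [] = 0"
  by (simp add: Fst_def)
lemma Fst_Cons: "Fst f (x # xs) = f [] x xs + Fst (\<lambda>a q r. f (x # a) q r) xs"
  by (simp add: Fst_def SS_Cons)


locale cum =
  fixes smB :: "'k::field_char_0 \<Rightarrow> 'b::ring_1 \<Rightarrow> 'b"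
    and smA :: "'k \<Rightarrow> 'a::ring_1 \<Rightarrow> 'a"
    and lact :: "'b \<Rightarrow> 'a \<Rightarrow> 'a" and ract :: "'a \<Rightarrow> 'b \<Rightarrow> 'a"
    and E :: "'a \<Rightarrow> 'b" and \<kappa> :: "'a list \<Rightarrow> 'b"
  assumes bps: "B_prob_space smB smA lact ract E"
    and cumu: "is_cumulants lact E \<kappa>"
begin

lemma lact_add2: "lact x (u + v) = lact x u + lact x v"
  using bps unfolding B_prob_space_def by simp
lemma lact_add1: "lact (x + y) u = lact x u + lact y u"
  using bps unfolding B_prob_space_def by simp
lemma lact_one[simp]: "lact 1 u = u"
  using bps unfolding B_prob_space_def by simp
lemma ract_one[simp]: "ract u 1 = u"
  using bps unfolding B_prob_space_def by simp
lemma lact_mult: "lact (x * y) u = lact x (lact y u)"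
  using bps unfolding B_prob_space_def by simp
lemma lact_times: "lact x (u * v) = lact x u * v"
  using bps unfolding B_prob_space_def by simp
lemma E_add: "E (u + v) = E u + E v"
  using bps unfolding B_prob_space_def by simp
lemma E_one[simp]: "E 1 = 1"
  using bps unfolding B_prob_space_def by simp
lemma E_lr: "E (lact x (ract u y)) = x * E u * y"
  using bps unfolding B_prob_space_def by meson
lemma E_lact: "E (lact x u) = x * E u"
  using E_lr[of x u 1] by simp

lemma lact_zero1[simp]: "lact 0 u = 0"
  using lact_add1[of 0 0 u] by simp
lemma lact_zero2[simp]: "lact x 0 = 0"
  using lact_add2[of x 0 0] by simp
lemma E_zero[simp]: "E 0 = 0"
  using E_add[of 0 0] by simp
lemma lact_minus2: "lact x (- u) = - lact x u"
  using lact_add2[of x u "-u"] by (metis lact_zero2 right_minus minus_unique)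
lemma lact_minus1: "lact (- x) u = - lact x u"
  using lact_add1[of x "-x" u] by (metis lact_zero1 right_minus minus_unique)
lemma lact_diff2: "lact x (u - v) = lact x u - lact x v"
  using lact_add2[of x u "-v"] lact_minus2 by simp
lemma lact_diff1: "lact (x - y) u = lact x u - lact y u"
  using lact_add1[of x "-y" u] lact_minus1 by simp
lemma E_minus: "E (- u) = - E u"
  using E_add[of u "-u"] by (metis E_zero right_minus minus_unique)
lemma E_diff: "E (u - v) = E u - E v"
  using E_add[of u "-v"] E_minus by simp
lemma lact_sum1: "lact (\<Sum>i\<in>S. f i) u = (\<Sum>i\<in>S. lact (f i) u)"
  by (induction S rule: infinite_finite_induct) (auto simp: lact_add1)
lemma lact_one_times: "lact x 1 * u = lact x u"
  using lact_times[of x 1 u] by simp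

definition M :: "'a list \<Rightarrow> 'b" where "M w = E (prod_list w)"
definition e :: "'a list \<Rightarrow> 'a \<Rightarrow> 'a" where "e g x = lact (M g) x"

lemma M_Nil[simp]: "M [] = 1" by (simp add: M_def)
lemma e_Nil[simp]: "e [] x = x" by (simp add: e_def)

primrec wk :: "('a list \<Rightarrow> 'a list \<Rightarrow> 'b) \<Rightarrow> 'a list \<Rightarrow> 'a list \<Rightarrow> 'a list \<Rightarrow> 'b" where
  "wk C P g [] = C P g"
| "wk C P g (x # xs) = wk C (P @ [e g x]) [] xs + wk C P (g @ [x]) xs"

definition fin :: "('a list \<Rightarrow> 'b) \<Rightarrow> 'a list \<Rightarrow> 'a list \<Rightarrow> 'b" where
  "fin F P g = (if g = [] then F P else 0)"

lemma fin_Nil[simp]: "fin F P [] = F P" and fin_Cons[simp]: "g \<noteq> [] \<Longrightarrow> fin F P g = 0"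
  by (auto simp: fin_def)

lemma wk_append: "wk C P g (xs @ ys) = wk (\<lambda>P' g'. wk C P' g' ys) P g xs"
  by (induction xs arbitrary: P g) auto

lemma wk_snoc: "wk C P g (xs @ [x]) = wk (\<lambda>P' g'. C (P' @ [e g' x]) [] + C P' (g' @ [x])) P g xs"
  by (simp add: wk_append)

lemma wk_prefix: "wk C P g xs = wk (\<lambda>L h. C (P @ L) h) [] g xs"
proof (induction xs arbitrary: P g C)
  case Nil then show ?case by simp
next
  case (Cons x xs)
  show ?case using Cons[of C "P @ [e g x]" "[]"] Cons[of C P "g @ [x]"]
      Cons[of "\<lambda>L h. C (P @ L) h" "[e g x]" "[]"]
    by simp
qed

lemma wk_add: "wk (\<lambda>P g. C1 P g + C2 P g) P g xs = wk C1 P g xs + wk C2 P g xs"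
  by (induction xs arbitrary: P g) (auto simp: algebra_simps)
lemma wk_zero: "wk (\<lambda>P g. 0) P g xs = 0"
  by (induction xs arbitrary: P g) auto
lemma wk_minus: "wk (\<lambda>P g. C1 P g - C2 P g) P g xs = wk C1 P g xs - wk C2 P g xs"
  by (induction xs arbitrary: P g) (auto simp: algebra_simps)
lemma wk_sum: "wk (\<lambda>P g. \<Sum>i\<in>S. C i P g) P g xs = (\<Sum>i\<in>S. wk (C i) P g xs)"
  by (induction xs arbitrary: P g) (auto simp: sum.distrib)
lemma wk_lmult: "wk (\<lambda>P g. c * C P g) P g xs = c * wk C P g xs"
  by (induction xs arbitrary: P g) (auto simp: algebra_simps)

lemma wk_hom:
  assumes "\<And>x y. h (x + y) = h x + h y"
  shows "h (wk C P g xs) = wk (\<lambda>P g. h (C P g)) P g xs"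
  by (induction xs arbitrary: P g) (auto simp: assms)

lemma fin_add: "fin (\<lambda>L. F1 L + F2 L) = (\<lambda>P g. fin F1 P g + fin F2 P g)"
  by (simp add: fin_def fun_eq_iff)

lemma fin_sum: "fin (\<lambda>L. \<Sum>i\<in>S. F i L) = (\<lambda>P g. \<Sum>i\<in>S. fin (F i) P g)"
  by (simp add: fin_def fun_eq_iff)
lemma fin_lmult: "fin (\<lambda>L. c * F L) = (\<lambda>P g. c * fin F P g)"
  by (simp add: fin_def fun_eq_iff)
lemma fin_minus: "fin (\<lambda>L. F1 L - F2 L) = (\<lambda>P g. fin F1 P g - fin F2 P g)"
  by (simp add: fin_def fun_eq_iff)
lemma wk_fin_add: "wk (fin (\<lambda>L. F1 L + F2 L)) P g xs = wk (fin F1) P g xs + wk (fin F2) P g xs"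
  by (simp add: fin_add wk_add)
lemma wk_fin_minus: "wk (fin (\<lambda>L. F1 L - F2 L)) P g xs = wk (fin F1) P g xs - wk (fin F2) P g xs"
  by (simp add: fin_minus wk_minus)
lemma wk_fin_sum: "wk (fin (\<lambda>L. \<Sum>i\<in>S. F i L)) P g xs = (\<Sum>i\<in>S. wk (fin (F i)) P g xs)"
  by (simp add: fin_sum wk_sum)
lemma wk_fin_lmult: "wk (fin (\<lambda>L. c * F L)) P g xs = c * wk (fin F) P g xs"
  by (simp add: fin_lmult wk_lmult)

lemma wk_cong:
  assumes "\<And>L h. length L \<le> length P + length xs \<Longrightarrow> C L h = C' L h"
  shows "wk C P g xs = wk C' P g xs"
  using assms
proof (induction xs arbitrary: P g)
  case Nil then show ?case by simp
next
  case (Cons x xs)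
  have "wk C (P @ [e g x]) [] xs = wk C' (P @ [e g x]) [] xs"
    by (rule Cons.IH) (use Cons.prems in auto)
  moreover have "wk C P (g @ [x]) xs = wk C' P (g @ [x]) xs"
    by (rule Cons.IH) (use Cons.prems in auto)
  ultimately show ?case by simp
qed

lemma wk_cong_inv:
  assumes "P \<noteq> [] \<or> g \<noteq> []"
    and "\<And>L h. length L \<le> length P + length xs \<Longrightarrow> L \<noteq> [] \<or> h \<noteq> [] \<Longrightarrow> C L h = C' L h"
  shows "wk C P g xs = wk C' P g xs"
  using assms
proof (induction xs arbitrary: P g)
  case Nil then show ?case by simp
next
  case (Cons x xs)
  have "wk C (P @ [e g x]) [] xs = wk C' (P @ [e g x]) [] xs"
    by (rule Cons.IH) (use Cons.prems in auto)
  moreover have "wk C P (g @ [x]) xs = wk C' P (g @ [x]) xs"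
    by (rule Cons.IH) (use Cons.prems in auto)
  ultimately show ?case by simp
qed

lemma wk_vanish_inv:
  assumes "P \<noteq> [] \<or> g \<noteq> []"
    and "\<And>L h. length L \<le> length P + length xs \<Longrightarrow> L \<noteq> [] \<or> h \<noteq> [] \<Longrightarrow> C L h = 0"
  shows "wk C P g xs = 0"
proof -
  have "wk C P g xs = wk (\<lambda>L h. 0) P g xs"
    by (rule wk_cong_inv) (use assms in auto)
  then show ?thesis by (simp add: wk_zero)
qed

lemma wk_top:
  assumes "xs \<noteq> []"
    and "\<And>L h. length L < length P + length xs \<Longrightarrow> L \<noteq> [] \<or> h \<noteq> [] \<Longrightarrow> C L h = 0"
  shows "wk C P [] xs = C (P @ xs) []"
  using assms
proof (induction xs arbitrary: P)
  case Nil then show ?case by simp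
next
  case (Cons x xs)
  have 2: "wk C P [x] xs = 0"
    by (rule wk_vanish_inv) (use Cons.prems in auto)
  show ?case
  proof (cases "xs = []")
    case True
    then show ?thesis using 2 by simp
  next
    case False
    have "wk C (P @ [x]) [] xs = C (P @ [x] @ xs) []"
      using Cons.IH[of "P @ [x]"] Cons.prems False by simp
    then show ?thesis using 2 by simp
  qed
qed

lemma wk_SS: "wk (\<lambda>P g. SS (f P g) b) P0 g0 xs = SS (\<lambda>Y h. wk (\<lambda>P g. f P g Y h) P0 g0 xs) b"
  unfolding SS_def by (rule wk_sum)

lemma fin_SS: "fin (\<lambda>L. SS (f L) b) = (\<lambda>P g. SS (\<lambda>Y h. fin (\<lambda>L. f L Y h) P g) b)"
  unfolding SS_def by (rule fin_sum)

lemma wk_first: "wk C P g xs = Fst (\<lambda>A q R. wk C (P @ [e (g @ A) q]) [] R) xs + C P (g @ xs)"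
proof (induction xs arbitrary: g)
  case Nil then show ?case by simp
next
  case (Cons x xs)
  show ?case using Cons.IH[of "g @ [x]"] by (simp add: Fst_Cons)
qed

lemma wk_full_last:
  "wk C [] [] Q = SS (\<lambda>Q1 g. wk (fin (\<lambda>pre. C pre g)) [] [] Q1) Q \<and>
   wk (fin F) [] [] (Q @ [x]) = SS (\<lambda>Q1 g. wk (fin (\<lambda>pre. F (pre @ [e g x]))) [] [] Q1) Q"
proof (induction Q arbitrary: C F x rule: rev_induct)
  case Nil then show ?case by simp
next
  case (snoc y Q)
  have last: "wk (fin F) [] [] (Q @ [y]) = SS (\<lambda>Q1 g. wk (fin (\<lambda>pre. F (pre @ [e g y]))) [] [] Q1) Q" for F
  proof -
    have "wk (fin F) [] [] (Q @ [y]) = wk (\<lambda>P' g'. F (P' @ [e g' y])) [] [] Q"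
      by (simp add: wk_snoc)
    also have "\<dots> = SS (\<lambda>Q1 g. wk (fin (\<lambda>pre. F (pre @ [e g y]))) [] [] Q1) Q"
      using snoc.IH by blast
    finally show ?thesis .
  qed
  have full: "wk C [] [] (Q @ [y]) = SS (\<lambda>Q1 g. wk (fin (\<lambda>pre. C pre g)) [] [] Q1) (Q @ [y])" for C
  proof -
    have "wk C [] [] (Q @ [y]) = wk (\<lambda>P' g'. C (P' @ [e g' y]) [] + C P' (g' @ [y])) [] [] Q"
      by (simp add: wk_snoc)
    also have "\<dots> = SS (\<lambda>Q1 g. wk (fin (\<lambda>pre. C (pre @ [e g y]) [] + C pre (g @ [y]))) [] [] Q1) Q"
      using snoc.IH by blast
    also have "\<dots> = SS (\<lambda>Q1 g. wk (fin (\<lambda>pre. C (pre @ [e g y]) [])) [] [] Q1) Q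
                  + SS (\<lambda>Q1 g. wk (fin (\<lambda>pre. C pre (g @ [y]))) [] [] Q1) Q"
      by (simp add: wk_fin_add SS_add)
    also have "SS (\<lambda>Q1 g. wk (fin (\<lambda>pre. C (pre @ [e g y]) [])) [] [] Q1) Q
             = wk (fin (\<lambda>pre. C pre [])) [] [] (Q @ [y])"
      using last[of "\<lambda>pre. C pre []"] by simp
    finally show ?thesis by (simp add: SS_snoc add.commute)
  qed
  show ?case
  proof
    show "wk C [] [] (Q @ [y]) = SS (\<lambda>Q1 g. wk (fin (\<lambda>pre. C pre g)) [] [] Q1) (Q @ [y])" by (rule full)
    have "wk (fin F) [] [] ((Q @ [y]) @ [x]) = wk (\<lambda>P' g'. F (P' @ [e g' x])) [] [] (Q @ [y])"
      by (simp add: wk_snoc del: append_assoc)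
    also have "\<dots> = SS (\<lambda>Q1 g. wk (fin (\<lambda>pre. F (pre @ [e g x]))) [] [] Q1) (Q @ [y])"
      by (rule full)
    finally show "wk (fin F) [] [] ((Q @ [y]) @ [x]) = SS (\<lambda>Q1 g. wk (fin (\<lambda>pre. F (pre @ [e g x]))) [] [] Q1) (Q @ [y])" .
  qed
qed

lemma wk_full: "wk C [] [] Q = SS (\<lambda>Q1 g. wk (fin (\<lambda>pre. C pre g)) [] [] Q1) Q"
  using wk_full_last by blast
lemma wk_last: "wk (fin F) [] [] (Q @ [x]) = SS (\<lambda>Q1 g. wk (fin (\<lambda>pre. F (pre @ [e g x]))) [] [] Q1) Q"
  using wk_full_last by blast

lemma wk_fin_SS: "wk (fin (\<lambda>p. SS (f p) b)) P g xs = SS (\<lambda>Y h. wk (fin (\<lambda>p. f p Y h)) P g xs) b"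
proof -
  have "wk (fin (\<lambda>p. SS (f p) b)) P g xs = wk (\<lambda>P g. SS (\<lambda>Y h. fin (\<lambda>L. f L Y h) P g) b) P g xs"
    by (simp add: fin_SS)
  also have "\<dots> = SS (\<lambda>Y h. wk (fin (\<lambda>p. f p Y h)) P g xs) b"
    by (rule wk_SS)
  finally show ?thesis .
qed

lemma wk_entry_split:
  "wk (fin (SS G)) [] [] P = SS (\<lambda>X1 X2. wk (fin (\<lambda>p1. wk (fin (G p1)) [] [] X2)) [] [] X1) P"
proof (induction "length P" arbitrary: P G rule: less_induct)
  case less
  show ?case
  proof (cases P rule: rev_cases)
    case Nil then show ?thesis by simp
  next
    case (snoc P' x)
    have "wk (fin (SS G)) [] [] P = SS (\<lambda>Q1 g. wk (fin (\<lambda>pre. SS G (pre @ [e g x]))) [] [] Q1) P'"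
      unfolding snoc by (rule wk_last)
    also have "\<dots> = SS (\<lambda>Q1 g. wk (fin (SS (\<lambda>a b. G a (b @ [e g x])))) [] [] Q1) P'
                   + SS (\<lambda>Q1 g. wk (fin (\<lambda>pre. G (pre @ [e g x]) [])) [] [] Q1) P'"
      by (simp add: SS_snoc wk_fin_add SS_add)
    also have "SS (\<lambda>Q1 g. wk (fin (\<lambda>pre. G (pre @ [e g x]) [])) [] [] Q1) P'
             = wk (fin (\<lambda>pre. G pre [])) [] [] P"
      unfolding snoc using wk_last[of "\<lambda>pre. G pre []" P' x] by simp
    also have "SS (\<lambda>Q1 g. wk (fin (SS (\<lambda>a b. G a (b @ [e g x])))) [] [] Q1) P'
             = SS (\<lambda>Q1 g. SS (\<lambda>X1 X2. wk (fin (\<lambda>p1. wk (fin (\<lambda>p2. G p1 (p2 @ [e g x]))) [] [] X2)) [] [] X1) Q1) P'"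
    proof (rule SS_cong)
      fix a b assume "P' = a @ b"
      then have "length a < length P" using snoc by simp
      then show "wk (fin (SS (\<lambda>aa ba. G aa (ba @ [e b x])))) [] [] a
          = SS (\<lambda>X1 X2. wk (fin (\<lambda>p1. wk (fin (\<lambda>p2. G p1 (p2 @ [e b x]))) [] [] X2)) [] [] X1) a"
        using less.hyps by blast
    qed
    also have "\<dots> = SS (\<lambda>a b. SS (\<lambda>Y h. wk (fin (\<lambda>p1. wk (fin (\<lambda>p2. G p1 (p2 @ [e h x]))) [] [] Y)) [] [] a) b) P'"
      by (rule SS_assoc)
    also have "\<dots> = SS (\<lambda>a b. wk (fin (\<lambda>p1. wk (fin (G p1)) [] [] (b @ [x]))) [] [] a) P'"
      by (simp add: wk_last wk_fin_SS)
    finally show ?thesis unfolding snoc by (simp add: SS_snoc)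
  qed
qed


end


lemma Y_0: "Y 0 = {Leaf}"
  unfolding Y_def by (auto elim: tsize.elims)

lemma Y_Suc: "Y (Suc m) = (\<Union>p\<le>m. (\<lambda>(l, r). Node l r) ` (Y p \<times> Y (m - p)))"
  unfolding Y_def
proof (rule set_eqI, rule iffI)
  fix t assume "t \<in> {t. tsize t = Suc m}"
  then obtain l r where "t = Node l r" "tsize l + tsize r = m" by (cases t) auto
  then show "t \<in> (\<Union>p\<le>m. (\<lambda>(l, r). Node l r) ` ({t. tsize t = p} \<times> {t. tsize t = m - p}))"
    by (intro UN_I[of "tsize l"]) auto
qed auto

lemma finite_Y: "finite (Y m)"
proof (induction m rule: less_induct)
  case (less m)
  show ?case
  proof (cases m)
    case 0 then show ?thesis by (simp add: Y_0)
  next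
    case (Suc m')
    have "\<And>p. p \<le> m' \<Longrightarrow> finite (Y p) \<and> finite (Y (m' - p))" using less Suc by auto
    then show ?thesis unfolding Suc Y_Suc by auto
  qed
qed

lemma sum_Y_Suc:
  "(\<Sum>t\<in>Y (Suc m). f t) = (\<Sum>p\<le>m. \<Sum>l\<in>Y p. \<Sum>r\<in>Y (m - p). f (Node l r))"
proof -
  have "(\<Sum>t\<in>Y (Suc m). f t) = (\<Sum>p\<le>m. \<Sum>t\<in>(\<lambda>(l, r). Node l r) ` (Y p \<times> Y (m - p)). f t)"
    unfolding Y_Suc
    apply (rule sum.UNION_disjoint)
      apply simp
     apply (simp add: finite_Y)
    apply (auto simp: Y_def)
    done
  also have "\<dots> = (\<Sum>p\<le>m. \<Sum>(l,r)\<in>Y p \<times> Y (m - p). f (Node l r))"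
    by (rule sum.cong[OF refl], subst sum.reindex) (auto simp: inj_on_def split_def)
  also have "\<dots> = (\<Sum>p\<le>m. \<Sum>l\<in>Y p. \<Sum>r\<in>Y (m - p). f (Node l r))"
    by (rule sum.cong[OF refl], rule sum.cartesian_product[symmetric])
  finally show ?thesis .
qed

context cum
begin

definition add_at :: "nat \<Rightarrow> bool" where
  "add_at n \<longleftrightarrow> (\<forall>P Q u v. length P + length Q + 1 = n \<longrightarrow>
      \<kappa> (P @ (u + v) # Q) = \<kappa> (P @ u # Q) + \<kappa> (P @ v # Q))"

lemma add_at_zero:
  assumes "add_at (length P + length Q + 1)"
  shows "\<kappa> (P @ 0 # Q) = 0"
  using assms unfolding add_at_def by (metis add.right_neutral add_cancel_right_right)

lemma add_at_sum:
  assumes "add_at (length A + length B + 1)" "finite S"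
  shows "(\<Sum>i\<in>S. \<kappa> (A @ lact (f i) x # B)) = \<kappa> (A @ lact (\<Sum>i\<in>S. f i) x # B)"
  using assms(2)
proof (induction S rule: finite_induct)
  case empty then show ?case using add_at_zero[OF assms(1)] by simp
next
  case (insert i S)
  then show ?case using assms(1) unfolding add_at_def by (simp add: lact_add1)
qed

lemma M_split: "M (ga @ (u + v) # gb) = M (ga @ u # gb) + M (ga @ v # gb)"
  by (simp add: M_def algebra_simps E_add)

lemma e_split_gap: "e (ga @ (u + v) # gb) x = e (ga @ u # gb) x + e (ga @ v # gb) x"
  by (simp add: e_def M_split lact_add1)

lemma e_split_x: "e g (u + v) = e g u + e g v"
  by (simp add: e_def lact_add2)

context
  fixes F :: "'a list \<Rightarrow> 'b"
  assumes Fadd: "\<And>A B u v. F (A @ (u + v) # B) = F (A @ u # B) + F (A @ v # B)"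
begin

lemma wk_add_entry:
  "wk (fin F) (Pa @ (u + v) # Pb) g xs = wk (fin F) (Pa @ u # Pb) g xs + wk (fin F) (Pa @ v # Pb) g xs"
proof (induction xs arbitrary: Pb g)
  case Nil then show ?case by (simp add: fin_def Fadd)
next
  case (Cons x xs)
  show ?case using Cons[of "Pb @ [e g x]" "[]"] Cons[of Pb "g @ [x]"] by simp
qed

lemma wk_add_gap:
  "wk (fin F) P (ga @ (u + v) # gb) xs = wk (fin F) P (ga @ u # gb) xs + wk (fin F) P (ga @ v # gb) xs"
proof (induction xs arbitrary: gb)
  case Nil then show ?case by simp
next
  case (Cons x xs)
  have 1: "wk (fin F) (P @ [e (ga @ (u + v) # gb) x]) [] xs
      = wk (fin F) (P @ [e (ga @ u # gb) x]) [] xs + wk (fin F) (P @ [e (ga @ v # gb) x]) [] xs"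
    unfolding e_split_gap using wk_add_entry[where Pa=P and Pb="[]"] by simp
  show ?case using Cons[of "gb @ [x]"] 1 by simp
qed

lemma wk_add_letter:
  "wk (fin F) P g (xa @ (u + v) # xb) = wk (fin F) P g (xa @ u # xb) + wk (fin F) P g (xa @ v # xb)"
proof (induction xa arbitrary: P g)
  case Nil
  have 1: "wk (fin F) (P @ [e g (u + v)]) [] xb = wk (fin F) (P @ [e g u]) [] xb + wk (fin F) (P @ [e g v]) [] xb"
    unfolding e_split_x using wk_add_entry[where Pa=P and Pb="[]"] by simp
  have 2: "wk (fin F) P (g @ [u + v]) xb = wk (fin F) P (g @ [u]) xb + wk (fin F) P (g @ [v]) xb"
    using wk_add_gap[where ga=g and gb="[]"] by simp
  show ?case using 1 2 by simp
next
  case (Cons y xa)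
  show ?case using Cons[of "P @ [e g y]" "[]"] Cons[of P "g @ [y]"] by simp
qed

end

lemma Fst_index: "Fst f xs = (\<Sum>k<length xs. f (take k xs) (xs ! k) (drop (Suc k) xs))"
proof -
  have "Fst f xs = (\<Sum>k\<le>length xs. case drop k xs of [] \<Rightarrow> 0 | q # R \<Rightarrow> f (take k xs) q R)"
    by (simp add: Fst_def SS_def)
  also have "\<dots> = (\<Sum>k<length xs. case drop k xs of [] \<Rightarrow> 0 | q # R \<Rightarrow> f (take k xs) q R)"
    by (simp add: lessThan_Suc_atMost[symmetric])
  also have "\<dots> = (\<Sum>k<length xs. f (take k xs) (xs ! k) (drop (Suc k) xs))"
    by (rule sum.cong[OF refl]) (simp add: Cons_nth_drop_Suc[symmetric])
  finally show ?thesis .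
qed

lemma wk_fin_pre: "wk (fin F) P g R = wk (fin (\<lambda>L. F (P @ L))) [] g R"
proof -
  have "(\<lambda>L h. fin F (P @ L) h) = fin (\<lambda>L. F (P @ L))" by (auto simp: fin_def fun_eq_iff)
  then show ?thesis using wk_prefix[of "fin F" P g R] by simp
qed

lemma wk_fin_single: "wk (fin F) [y] g R = wk (fin (\<lambda>L. F (y # L))) [] g R"
  using wk_fin_pre[of F "[y]"] by simp

lemma wk_first_full:
  assumes "as \<noteq> []"
  shows "wk (fin F) [] [] as = (\<Sum>p<length as. wk (fin (\<lambda>L. F (e (take p as) (as ! p) # L))) [] [] (drop (Suc p) as))"
  using wk_first[of "fin F" "[]" "[]" as] assms by (simp add: Fst_index wk_fin_single)

lemma kappa_tree_Node: "kappa_tree lact \<kappa> (Node l r) as = \<kappa> (spine_args lact \<kappa> (Node l r) as)"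
  by (simp add: kappa_tree_def)

lemma spine_Node: "spine_args lact \<kappa> (Node l r) as =
    lact (kappa_tree lact \<kappa> l (take (tsize l) as)) (as ! tsize l) # spine_args lact \<kappa> r (drop (tsize l + 1) as)"
  by (simp add: kappa_tree_def)

lemma TS:
  assumes "length as = m" "\<forall>k < length pre + m. add_at k"
  shows "(\<Sum>t\<in>Y m. \<kappa> (pre @ spine_args lact \<kappa> t as)) = wk (fin (\<lambda>L. \<kappa> (pre @ L))) [] [] as"
  using assms
proof (induction m arbitrary: pre as rule: less_induct)
  case (less m)
  show ?case
  proof (cases m)
    case 0 then show ?thesis using less.prems by (simp add: Y_0)
  next
    case (Suc m')
    have ne: "as \<noteq> []" using less.prems Suc by auto
    have "(\<Sum>t\<in>Y m. \<kappa> (pre @ spine_args lact \<kappa> t as))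
        = (\<Sum>p\<le>m'. \<Sum>l\<in>Y p. \<Sum>r\<in>Y (m' - p). \<kappa> ((pre @ [lact (kappa_tree lact \<kappa> l (take p as)) (as ! p)])
              @ spine_args lact \<kappa> r (drop (Suc p) as)))"
      unfolding Suc sum_Y_Suc
    proof (intro sum.cong refl)
      fix p l r assume "l \<in> Y p"
      then have "tsize l = p" by (simp add: Y_def)
      then show "\<kappa> (pre @ spine_args lact \<kappa> (Node l r) as) = \<kappa> ((pre @ [lact (kappa_tree lact \<kappa> l (take p as)) (as ! p)])
              @ spine_args lact \<kappa> r (drop (Suc p) as))"
        unfolding spine_Node by simp
    qed
    also have "\<dots> = (\<Sum>p\<le>m'. \<Sum>l\<in>Y p. wk (fin (\<lambda>L. \<kappa> ((pre @ [lact (kappa_tree lact \<kappa> l (take p as)) (as ! p)]) @ L))) [] [] (drop (Suc p) as))"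
    proof (intro sum.cong refl)
      fix p l assume p: "p \<in> {..m'}"
      show "(\<Sum>r\<in>Y (m' - p). \<kappa> ((pre @ [lact (kappa_tree lact \<kappa> l (take p as)) (as ! p)]) @ spine_args lact \<kappa> r (drop (Suc p) as)))
          = wk (fin (\<lambda>L. \<kappa> ((pre @ [lact (kappa_tree lact \<kappa> l (take p as)) (as ! p)]) @ L))) [] [] (drop (Suc p) as)"
        by (rule less.IH) (use p less.prems Suc in auto)
    qed
    also have "\<dots> = (\<Sum>p\<le>m'. wk (fin (\<lambda>L. \<Sum>l\<in>Y p. \<kappa> (pre @ lact (kappa_tree lact \<kappa> l (take p as)) (as ! p) # L))) [] [] (drop (Suc p) as))"
      by (simp add: wk_fin_sum)
    also have "\<dots> = (\<Sum>p\<le>m'. wk (fin (\<lambda>L. \<kappa> (pre @ e (take p as) (as ! p) # L))) [] [] (drop (Suc p) as))"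
    proof (intro sum.cong refl wk_cong)
      fix p :: nat and L h :: "'a list" assume p: "p \<in> {..m'}" and L: "length L \<le> length ([]::'a list) + length (drop (Suc p) as)"
      have cu: "(\<Sum>l\<in>Y p. kappa_tree lact \<kappa> l (take p as)) = M (take p as)"
        using cumu p less.prems Suc unfolding is_cumulants_def M_def by (metis length_take min.absorb4 le_imp_less_Suc atMost_iff)
      have "(\<Sum>l\<in>Y p. \<kappa> (pre @ lact (kappa_tree lact \<kappa> l (take p as)) (as ! p) # L))
          = \<kappa> (pre @ lact (\<Sum>l\<in>Y p. kappa_tree lact \<kappa> l (take p as)) (as ! p) # L)"
      proof (cases p)
        case 0 then show ?thesis by (simp add: Y_0)
      next
        case (Suc p')
        show ?thesis
          by (rule add_at_sum) (use less.prems L p Suc \<open>m = Suc m'\<close> finite_Y in auto)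
      qed
      then show "fin (\<lambda>L. \<Sum>l\<in>Y p. \<kappa> (pre @ lact (kappa_tree lact \<kappa> l (take p as)) (as ! p) # L)) L h
          = fin (\<lambda>L. \<kappa> (pre @ e (take p as) (as ! p) # L)) L h"
        by (simp add: fin_def cu e_def)
    qed
    also have "\<dots> = wk (fin (\<lambda>L. \<kappa> (pre @ L))) [] [] as"
      using wk_first_full[OF ne, of "\<lambda>L. \<kappa> (pre @ L)"] less.prems Suc
      by (simp add: lessThan_Suc_atMost[symmetric])
    finally show ?thesis .
  qed
qed

lemma R_from_add:
  assumes "\<forall>k < length w. add_at k" "w \<noteq> []"
  shows "M w = wk (fin \<kappa>) [] [] w"
proof -
  have "M w = (\<Sum>t\<in>Y (length w). kappa_tree lact \<kappa> t w)"
    using cumu unfolding is_cumulants_def M_def by blast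
  also have "\<dots> = (\<Sum>t\<in>Y (length w). \<kappa> ([] @ spine_args lact \<kappa> t w))"
  proof (rule sum.cong[OF refl])
    fix t assume "t \<in> Y (length w)"
    then have "t \<noteq> Leaf" using assms(2) by (auto simp: Y_def)
    then show "kappa_tree lact \<kappa> t w = \<kappa> ([] @ spine_args lact \<kappa> t w)"
      by (cases t) (auto simp: kappa_tree_def)
  qed
  also have "\<dots> = wk (fin (\<lambda>L. \<kappa> ([] @ L))) [] [] w"
    by (rule TS) (use assms in auto)
  finally show ?thesis by simp
qed

lemma add_all: "add_at n"
proof (induction n rule: less_induct)
  case (less n)
  show ?case unfolding add_at_def
  proof (intro allI impI)
    fix P Q :: "'a list" and u v :: 'a
    assume len: "length P + length Q + 1 = n"
    define F' where "F' = (\<lambda>L. if length L < n then \<kappa> L else 0)"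
    have F'add: "F' (A @ (x + y) # B) = F' (A @ x # B) + F' (A @ y # B)" for A B x y
      using less unfolding F'_def add_at_def by auto
    have dec: "M w = wk (fin F') [] [] w + \<kappa> w" if "length w = n" for w
    proof -
      have ne: "w \<noteq> []" using that len by auto
      have "M w = wk (fin \<kappa>) [] [] w"
        by (rule R_from_add) (use less that ne in auto)
      moreover have "wk (fin (\<lambda>L. \<kappa> L - F' L)) [] [] w = \<kappa> w - F' w"
        using wk_top[OF ne, where C="fin (\<lambda>L. \<kappa> L - F' L)" and P="[]"] that
        by (simp add: F'_def fin_def)
      ultimately show ?thesis
        using that by (simp add: wk_fin_minus F'_def algebra_simps)
    qed
    have "M (P @ (u + v) # Q) = M (P @ u # Q) + M (P @ v # Q)"
      by (rule M_split)
    moreover have "wk (fin F') [] [] (P @ (u + v) # Q) = wk (fin F') [] [] (P @ u # Q) + wk (fin F') [] [] (P @ v # Q)"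
      by (rule wk_add_letter[OF F'add])
    ultimately show "\<kappa> (P @ (u + v) # Q) = \<kappa> (P @ u # Q) + \<kappa> (P @ v # Q)"
      using dec[of "P @ (u + v) # Q"] dec[of "P @ u # Q"] dec[of "P @ v # Q"] len
      by (simp add: algebra_simps)
  qed
qed

lemma R: "w \<noteq> [] \<Longrightarrow> M w = wk (fin \<kappa>) [] [] w"
  using R_from_add add_all by blast

lemma kappa_add: "\<kappa> (P @ (u + v) # Q) = \<kappa> (P @ u # Q) + \<kappa> (P @ v # Q)"
  using add_all unfolding add_at_def by blast

lemma kappa_zero: "\<kappa> (P @ 0 # Q) = 0"
  using add_at_zero add_all by blast

lemma kappa_minus: "\<kappa> (P @ (- u) # Q) = - \<kappa> (P @ u # Q)"
  using kappa_add[of P u "-u" Q] kappa_zero[of P Q] by (metis right_minus minus_unique)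

lemma kappa_diff: "\<kappa> (P @ (u - v) # Q) = \<kappa> (P @ u # Q) - \<kappa> (P @ v # Q)"
  using kappa_add[of P u "-v" Q] kappa_minus by simp

lemma kappa_single: "\<kappa> [x] = E x"
  using R[of "[x]"] by (simp add: M_def)

end


context cum
begin

lemma wk_fin_hom:
  assumes "\<And>x y. h (x + y) = h x + h y"
  shows "h (wk (fin G) P g xs) = wk (fin (\<lambda>L. h (G L))) P g xs"
proof -
  have h0: "h 0 = 0" using assms[of 0 0] by simp
  have "h (wk (fin G) P g xs) = wk (\<lambda>P g. h (fin G P g)) P g xs" by (rule wk_hom[OF assms])
  also have "(\<lambda>P g. h (fin G P g)) = fin (\<lambda>L. h (G L))" by (auto simp: fin_def fun_eq_iff h0)
  finally show ?thesis .
qed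

lemma Fst_assoc:
  "SS (\<lambda>X1 X2. Fst (\<lambda>A q R. f X1 A q R) X2) Q = Fst (\<lambda>A q R. SS (\<lambda>A1 A2. f A1 A2 q R) A) Q"
proof -
  define g where "g X1 A B = (case B of [] \<Rightarrow> 0 | q # R \<Rightarrow> f X1 A q R)" for X1 A B
  have "SS (\<lambda>X1 X2. Fst (\<lambda>A q R. f X1 A q R) X2) Q = SS (\<lambda>A1 R. SS (\<lambda>A2 B. g A1 A2 B) R) Q"
    by (simp add: Fst_def g_def)
  also have "\<dots> = SS (\<lambda>A B. SS (\<lambda>A1 A2. g A1 A2 B) A) Q"
    by (rule SS_assoc[symmetric])
  also have "\<dots> = Fst (\<lambda>A q R. SS (\<lambda>A1 A2. f A1 A2 q R) A) Q"
    unfolding Fst_def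
    by (rule SS_cong) (auto simp: g_def SS_zero split: list.split)
  finally show ?thesis .
qed

lemma Fst_lmult: "(c::'b) * Fst f xs = Fst (\<lambda>A q R. c * f A q R) xs"
  by (simp add: Fst_index sum_distrib_left)

lemma wk_fin_Fst: "wk (fin (\<lambda>p. Fst (f p) b)) P g xs = Fst (\<lambda>A q R. wk (fin (\<lambda>p. f p A q R)) P g xs) b"
  by (simp add: Fst_index wk_fin_sum)

lemma SS_last_only: "SS (\<lambda>a b. if b = [] then f a else 0) xs = f xs"
proof (induction xs arbitrary: f)
  case Nil then show ?case by simp
next
  case (Cons x xs)
  show ?case using Cons[of "\<lambda>a. f (x # a)"] by (simp add: SS_Cons)
qed

lemma M_cons_lact: "M (lact c x # ys) = c * M (x # ys)"
  by (simp add: M_def lact_times[symmetric] E_lact)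

lemma e_cons_lact: "e (lact c x # h) y = lact c (e (x # h) y)"
  by (simp add: e_def M_cons_lact lact_mult)

lemma wk_gap_lact:
  "wk (fin F) [] (lact c x # h) ys = wk (fin (\<lambda>L. case L of [] \<Rightarrow> F [] | y # L' \<Rightarrow> F (lact c y # L'))) [] (x # h) ys"
proof (induction ys arbitrary: h)
  case Nil then show ?case by simp
next
  case (Cons y ys)
  have "wk (fin F) [e (lact c x # h) y] [] ys
      = wk (fin (\<lambda>L. case L of [] \<Rightarrow> F [] | y # L' \<Rightarrow> F (lact c y # L'))) [e (x # h) y] [] ys"
    by (simp add: e_cons_lact wk_fin_single)
  then show ?case using Cons[of "h @ [y]"] by simp
qed

lemma kappa_lact: "\<kappa> (lact c x # L) = c * \<kappa> (x # L)"
proof (induction "length L" arbitrary: L x c rule: less_induct)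
  case less
  show ?case
  proof (cases "L = []")
    case True then show ?thesis by (simp add: kappa_single E_lact)
  next
    case False
    define F' where "F' = (\<lambda>L. case L of [] \<Rightarrow> \<kappa> [] | y # L' \<Rightarrow> \<kappa> (lact c y # L'))"
    have "M (lact c x # L) = wk (fin (\<lambda>L'. \<kappa> (lact c x # L'))) [] [] L + wk (fin F') [] [x] L"
      using R[of "lact c x # L"] wk_gap_lact[of \<kappa> c x "[]" L] by (simp add: wk_fin_single F'_def)
    moreover have "M (x # L) = wk (fin (\<lambda>L'. \<kappa> (x # L'))) [] [] L + wk (fin \<kappa>) [] [x] L"
      using R[of "x # L"] by (simp add: wk_fin_single)
    moreover have "wk (fin F') [] [x] L = wk (fin (\<lambda>L'. c * \<kappa> L')) [] [x] L"
    proof (rule wk_cong_inv)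
      fix L' h :: "'a list" assume l: "length L' \<le> length ([]::'a list) + length L" and ne: "L' \<noteq> [] \<or> h \<noteq> []"
      show "fin F' L' h = fin (\<lambda>L'. c * \<kappa> L') L' h"
      proof (cases "h = []")
        case True
        then obtain y L'' where "L' = y # L''" using ne by (cases L') auto
        then show ?thesis using less.hyps[of L'' c y] l True by (simp add: F'_def)
      qed simp
    qed simp
    moreover have "wk (fin (\<lambda>L'. \<kappa> (lact c x # L') - c * \<kappa> (x # L'))) [] [] L = \<kappa> (lact c x # L) - c * \<kappa> (x # L)"
    proof -
      have "wk (fin (\<lambda>L'. \<kappa> (lact c x # L') - c * \<kappa> (x # L'))) [] [] L
          = fin (\<lambda>L'. \<kappa> (lact c x # L') - c * \<kappa> (x # L')) ([] @ L) []"
      proof (rule wk_top[OF False])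
        fix L' h :: "'a list" assume "length L' < length ([]::'a list) + length L"
        then show "fin (\<lambda>L'. \<kappa> (lact c x # L') - c * \<kappa> (x # L')) L' h = 0"
          using less.hyps[of L' c x] by (simp add: fin_def)
      qed
      then show ?thesis by simp
    qed
    ultimately show ?thesis
      using M_cons_lact[of c x L]
      by (simp add: wk_fin_lmult wk_fin_minus algebra_simps)
  qed
qed

definition K :: "'a \<Rightarrow> 'a list \<Rightarrow> 'b" where
  "K z A = wk (fin (\<lambda>L. \<kappa> (z # L))) [] [] A"

lemma M_as_Fst: "X \<noteq> [] \<Longrightarrow> M X = Fst (\<lambda>A q R. wk (fin \<kappa>) [e A q] [] R) X"
  using R[of X] wk_first[of "fin \<kappa>" "[]" "[]" X] by simp

lemma wk_entry_hom: "wk (fin \<kappa>) (X @ [c1 + c2]) [] R = wk (fin \<kappa>) (X @ [c1]) [] R + wk (fin \<kappa>) (X @ [c2]) [] R"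
  using wk_add_entry[of \<kappa> X c1 c2 "[]" "[]" R] kappa_add by simp

lemma wk_entry_lact: "wk (fin \<kappa>) [lact k c] [] R = k * wk (fin \<kappa>) [c] [] R"
  by (simp add: wk_fin_single kappa_lact wk_fin_lmult)

lemma first_block: "M (z # Ys) = SS (\<lambda>A1 A2. K z A1 * M A2) Ys"
proof (induction "length Ys" arbitrary: Ys rule: less_induct)
  case less
  have eq: "e (z # A) q = SS (\<lambda>A1 A2. lact (K z A1) (e A2 q)) A" if "length A < length Ys" for A q
  proof -
    have "e (z # A) q = lact (SS (\<lambda>A1 A2. K z A1 * M A2) A) q"
      using less.hyps[OF that] by (simp add: e_def)
    also have "\<dots> = SS (\<lambda>A1 A2. lact (K z A1 * M A2) q) A"
      by (rule SS_hom) (simp add: lact_add1)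
    finally show ?thesis by (simp add: lact_mult e_def)
  qed
  have "M (z # Ys) = K z Ys + wk (fin \<kappa>) [] [z] Ys"
    using R[of "z # Ys"] by (simp add: K_def wk_fin_single)
  also have "wk (fin \<kappa>) [] [z] Ys = Fst (\<lambda>A q R. wk (fin \<kappa>) [e (z # A) q] [] R) Ys"
    using wk_first[of "fin \<kappa>" "[]" "[z]" Ys] by simp
  also have "\<dots> = Fst (\<lambda>A q R. SS (\<lambda>A1 A2. K z A1 * wk (fin \<kappa>) [e A2 q] [] R) A) Ys"
    unfolding Fst_index
  proof (rule sum.cong[OF refl])
    fix k assume "k \<in> {..<length Ys}"
    then have lt: "length (take k Ys) < length Ys" by simp
    have "wk (fin \<kappa>) [e (z # take k Ys) (Ys ! k)] [] (drop (Suc k) Ys)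
        = wk (fin \<kappa>) [SS (\<lambda>A1 A2. lact (K z A1) (e A2 (Ys ! k))) (take k Ys)] [] (drop (Suc k) Ys)"
      by (simp add: eq[OF lt])
    also have "\<dots> = SS (\<lambda>A1 A2. wk (fin \<kappa>) [lact (K z A1) (e A2 (Ys ! k))] [] (drop (Suc k) Ys)) (take k Ys)"
      by (rule SS_hom) (use wk_entry_hom[of "[]"] in simp)
    also have "\<dots> = SS (\<lambda>A1 A2. K z A1 * wk (fin \<kappa>) [e A2 (Ys ! k)] [] (drop (Suc k) Ys)) (take k Ys)"
      by (simp add: wk_entry_lact)
    finally show "wk (fin \<kappa>) [e (z # take k Ys) (Ys ! k)] [] (drop (Suc k) Ys)
        = SS (\<lambda>A1 A2. K z A1 * wk (fin \<kappa>) [e A2 (Ys ! k)] [] (drop (Suc k) Ys)) (take k Ys)" .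
  qed
  also have "\<dots> = SS (\<lambda>X1 X2. Fst (\<lambda>A q R. K z X1 * wk (fin \<kappa>) [e A q] [] R) X2) Ys"
    by (rule Fst_assoc[symmetric])
  also have "\<dots> = SS (\<lambda>X1 X2. K z X1 * M X2 - (if X2 = [] then K z X1 else 0)) Ys"
    by (rule SS_cong) (auto simp: M_as_Fst Fst_lmult)
  also have "SS (\<lambda>X1 X2. K z X1 * M X2 - (if X2 = [] then K z X1 else 0)) Ys = SS (\<lambda>A1 A2. K z A1 * M A2) Ys - K z Ys"
    by (simp add: SS_diff SS_last_only)
  finally show ?case by simp
qed

end


context cum
begin

definition Gam :: "'a list \<Rightarrow> 'a \<Rightarrow> 'a \<Rightarrow> 'a list \<Rightarrow> 'b" where
  "Gam P v z Q = SS (\<lambda>A B. \<kappa> (A @ lact (\<kappa> (B @ [v])) z # Q)) P"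
definition Bet :: "'a list \<Rightarrow> 'a \<Rightarrow> 'a \<Rightarrow> 'a list \<Rightarrow> 'b" where
  "Bet P v z Q = Fst (\<lambda>A c B. \<kappa> (P @ v # lact (\<kappa> (z # A)) c # B)) Q"
definition Del :: "'a list \<Rightarrow> 'a \<Rightarrow> 'a \<Rightarrow> 'a list \<Rightarrow> 'b" where
  "Del P v z Q = \<kappa> (P @ (v * z) # Q) - \<kappa> (P @ v # z # Q) - Gam P v z Q - Bet P v z Q"

lemma wk_gap_inv:
  assumes "g \<noteq> []" "g' \<noteq> []" "prod_list g = prod_list g'"
  shows "wk (fin F) P g xs = wk (fin F) P g' xs"
  using assms
proof (induction xs arbitrary: P g g')
  case Nil then show ?case by simp
next
  case (Cons x xs)
  have "e g x = e g' x" using Cons.prems by (simp add: e_def M_def)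
  then show ?case using Cons.IH[of "g @ [x]" "g' @ [x]"] Cons.prems by simp
qed

lemma wk_top_fin:
  assumes "\<And>L. length L < length Q \<Longrightarrow> D L = 0"
  shows "wk (fin D) [] [] Q = D Q"
proof (cases "Q = []")
  case True then show ?thesis by simp
next
  case False
  have "wk (fin D) [] [] Q = fin D ([] @ Q) []"
    by (rule wk_top[OF False]) (use assms in \<open>auto simp: fin_def\<close>)
  then show ?thesis by simp
qed

lemma CB:
  "wk (fin (Fst (\<lambda>A c B. \<kappa> (X @ lact (\<kappa> (z # A)) c # B)))) [] [] Q = wk (fin \<kappa>) X [z] Q"
proof -
  define \<Psi> where "\<Psi> = (\<lambda>p1 c L. \<kappa> (X @ lact (\<kappa> (z # p1)) c # L))"
  define G where "G A B = (case B of [] \<Rightarrow> 0 | c # B' \<Rightarrow> \<Psi> A c B')" for A B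
  have Gd: "G = (\<lambda>A B. case B of [] \<Rightarrow> 0 | c # B' \<Rightarrow> \<Psi> A c B')" by (simp add: G_def fun_eq_iff)
  have "Fst (\<lambda>A c B. \<kappa> (X @ lact (\<kappa> (z # A)) c # B)) = SS G"
    by (auto simp: fun_eq_iff Fst_def Gd \<Psi>_def)
  then have "wk (fin (Fst (\<lambda>A c B. \<kappa> (X @ lact (\<kappa> (z # A)) c # B)))) [] [] Q
      = SS (\<lambda>X1 X2. wk (fin (\<lambda>p1. wk (fin (G p1)) [] [] X2)) [] [] X1) Q"
    by (simp add: wk_entry_split)
  also have "\<dots> = SS (\<lambda>X1 X2. wk (fin (\<lambda>p1. Fst (\<lambda>A q R. wk (fin (\<Psi> p1 (e A q))) [] [] R) X2)) [] [] X1) Q"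
  proof -
    have "wk (fin (G p1)) [] [] X2 = Fst (\<lambda>A q R. wk (fin (\<Psi> p1 (e A q))) [] [] R) X2" for p1 X2
    proof -
      have "wk (fin (G p1)) [] [] X2 = Fst (\<lambda>A q R. wk (fin (G p1)) [e A q] [] R) X2 + fin (G p1) [] X2"
        using wk_first[of "fin (G p1)" "[]" "[]" X2] by simp
      moreover have "fin (G p1) [] X2 = 0" by (cases X2) (auto simp: G_def)
      moreover have "wk (fin (G p1)) [c] [] R = wk (fin (\<Psi> p1 c)) [] [] R" for c R
      proof -
        have "(\<lambda>L. G p1 (c # L)) = \<Psi> p1 c" by (auto simp: G_def fun_eq_iff)
        then show ?thesis by (simp add: wk_fin_single)
      qed
      ultimately show ?thesis by simp
    qed
    then show ?thesis by simp
  qed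
  also have "\<dots> = SS (\<lambda>X1 X2. Fst (\<lambda>A q R. wk (fin (\<lambda>p1. wk (fin (\<Psi> p1 (e A q))) [] [] R)) [] [] X1) X2) Q"
    by (simp add: wk_fin_Fst)
  also have "\<dots> = Fst (\<lambda>A q R. SS (\<lambda>A1 A2. wk (fin (\<lambda>p1. wk (fin (\<Psi> p1 (e A2 q))) [] [] R)) [] [] A1) A) Q"
    by (rule Fst_assoc)
  also have "\<dots> = Fst (\<lambda>A q R. wk (fin \<kappa>) (X @ [e ([z] @ A) q]) [] R) Q"
    unfolding Fst_index
  proof (rule sum.cong[OF refl])
    fix k assume "k \<in> {..<length Q}"
    define A where "A = take k Q"
    define q where "q = Q ! k"
    define R where "R = drop (Suc k) Q"
    define h where "h c k' = wk (fin \<kappa>) (X @ [lact k' c]) [] R" for c k'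
    have hadd: "h c (x + y) = h c x + h c y" for c x y
      unfolding h_def by (simp add: lact_add1 wk_entry_hom)
    have "wk (fin \<kappa>) (X @ [e ([z] @ A) q]) [] R = wk (fin \<kappa>) (X @ [SS (\<lambda>A1 A2. lact (K z A1) (e A2 q)) A]) [] R"
    proof -
      have "e (z # A) q = lact (SS (\<lambda>A1 A2. K z A1 * M A2) A) q"
        by (simp add: e_def first_block)
      also have "\<dots> = SS (\<lambda>A1 A2. lact (K z A1 * M A2) q) A"
        by (rule SS_hom) (simp add: lact_add1)
      finally show ?thesis by (simp add: lact_mult e_def)
    qed
    also have "\<dots> = SS (\<lambda>A1 A2. wk (fin \<kappa>) (X @ [lact (K z A1) (e A2 q)]) [] R) A"
      by (rule SS_hom) (simp add: wk_entry_hom)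
    also have "\<dots> = SS (\<lambda>A1 A2. wk (fin (\<lambda>p1. wk (fin (\<Psi> p1 (e A2 q))) [] [] R)) [] [] A1) A"
    proof (rule SS_cong)
      fix A1 A2
      have "wk (fin \<kappa>) (X @ [lact (K z A1) (e A2 q)]) [] R = h (e A2 q) (K z A1)"
        by (simp add: h_def)
      also have "\<dots> = wk (fin (\<lambda>L. h (e A2 q) (\<kappa> (z # L)))) [] [] A1"
        unfolding K_def by (rule wk_fin_hom) (rule hadd)
      also have "(\<lambda>L. h (e A2 q) (\<kappa> (z # L))) = (\<lambda>p1. wk (fin (\<Psi> p1 (e A2 q))) [] [] R)"
      proof (rule ext)
        fix p1
        show "h (e A2 q) (\<kappa> (z # p1)) = wk (fin (\<Psi> p1 (e A2 q))) [] [] R"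
          unfolding h_def using wk_fin_pre[of \<kappa> "X @ [lact (\<kappa> (z # p1)) (e A2 q)]" "[]" R]
          by (simp add: \<Psi>_def)
      qed
      finally show "wk (fin \<kappa>) (X @ [lact (K z A1) (e A2 q)]) [] R
          = wk (fin (\<lambda>p1. wk (fin (\<Psi> p1 (e A2 q))) [] [] R)) [] [] A1" .
    qed
    finally show "SS (\<lambda>A1 A2. wk (fin (\<lambda>p1. wk (fin (\<Psi> p1 (e A2 (Q ! k)))) [] [] (drop (Suc k) Q))) [] [] A1) (take k Q)
        = wk (fin \<kappa>) (X @ [e ([z] @ take k Q) (Q ! k)]) [] (drop (Suc k) Q)"
      by (simp add: A_def q_def R_def)
  qed
  also have "\<dots> = wk (fin \<kappa>) X [z] Q"
    using wk_first[of "fin \<kappa>" X "[z]" Q] by simp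
  finally show ?thesis .
qed

lemma CG:
  "wk (\<lambda>pre g. wk (fin (Gam pre (e g v) z)) [] [] Q) [] [] P
   = wk (\<lambda>pre g. wk (fin \<kappa>) (pre @ [e (g @ [v]) z]) [] Q) [] [] P"
proof -
  define H where "H A c = wk (fin (\<lambda>L. \<kappa> (A @ lact c z # L))) [] [] Q" for A c
  have Hadd: "H A (x + y) = H A x + H A y" for A x y
    unfolding H_def by (simp add: lact_add1 kappa_add wk_fin_add)
  define \<Phi> where "\<Phi> X1 X2 g = wk (fin (\<lambda>p1. wk (fin (\<lambda>p2. H p1 (\<kappa> (p2 @ [e g v])))) [] [] X2)) [] [] X1" for X1 X2 g
  have L1: "wk (fin (Gam pre V z)) [] [] Q = SS (\<lambda>A B. H A (\<kappa> (B @ [V]))) pre" for pre V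
  proof -
    have "Gam pre V z = (\<lambda>L. SS (\<lambda>A B. \<kappa> (A @ lact (\<kappa> (B @ [V])) z # L)) pre)"
      by (simp add: fun_eq_iff Gam_def)
    then show ?thesis by (simp add: wk_fin_SS H_def)
  qed
  have "wk (\<lambda>pre g. wk (fin (Gam pre (e g v) z)) [] [] Q) [] [] P
      = wk (\<lambda>pre g. SS (\<lambda>A B. H A (\<kappa> (B @ [e g v]))) pre) [] [] P"
    by (simp add: L1)
  also have "\<dots> = SS (\<lambda>P1 g. wk (fin (SS (\<lambda>A B. H A (\<kappa> (B @ [e g v]))))) [] [] P1) P"
    by (subst wk_full) simp
  also have "\<dots> = SS (\<lambda>P1 g. SS (\<lambda>X1 X2. \<Phi> X1 X2 g) P1) P"
    by (simp add: wk_entry_split \<Phi>_def)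
  also have "\<dots> = SS (\<lambda>P1 g. SS (\<lambda>Q1 h. \<Phi> P1 Q1 h) g) P"
    by (rule SS_assoc)
  also have "\<dots> = SS (\<lambda>P1 g. wk (fin (\<lambda>pre. SS (\<lambda>Q1 h. wk (fin (\<lambda>p. H pre (\<kappa> (p @ [e h v])))) [] [] Q1) g)) [] [] P1) P"
    by (simp add: wk_fin_SS \<Phi>_def)
  also have "\<dots> = wk (\<lambda>pre g. SS (\<lambda>Q1 h. wk (fin (\<lambda>p. H pre (\<kappa> (p @ [e h v])))) [] [] Q1) g) [] [] P"
    by (subst (2) wk_full) simp
  also have "\<dots> = wk (\<lambda>pre g. wk (fin \<kappa>) (pre @ [e (g @ [v]) z]) [] Q) [] [] P"
  proof -
    have "SS (\<lambda>Q1 h. wk (fin (\<lambda>p. H pre (\<kappa> (p @ [e h v])))) [] [] Q1) g = wk (fin \<kappa>) (pre @ [e (g @ [v]) z]) [] Q" for pre g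
    proof -
      have "wk (fin \<kappa>) (pre @ [e (g @ [v]) z]) [] Q = H pre (M (g @ [v]))"
        unfolding H_def e_def using wk_fin_pre[of \<kappa> "pre @ [lact (M (g @ [v])) z]" "[]" Q] by simp
      also have "\<dots> = H pre (SS (\<lambda>Q1 h. wk (fin (\<lambda>p. \<kappa> (p @ [e h v]))) [] [] Q1) g)"
        by (simp add: R wk_last)
      also have "\<dots> = SS (\<lambda>Q1 h. H pre (wk (fin (\<lambda>p. \<kappa> (p @ [e h v]))) [] [] Q1)) g"
        by (rule SS_hom) (rule Hadd)
      also have "\<dots> = SS (\<lambda>Q1 h. wk (fin (\<lambda>p. H pre (\<kappa> (p @ [e h v])))) [] [] Q1) g"
        by (simp add: wk_fin_hom[where h="H pre", OF Hadd])
      finally show ?thesis by simp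
    qed
    then show ?thesis by simp
  qed
  finally show ?thesis .
qed

end


context cum
begin

lemma e_times: "e g (u * w) = e g u * w"
  by (simp add: e_def lact_times)

lemma F5: "Del P v z Q = 0"
proof (induction "length P + length Q" arbitrary: P v z Q rule: less_induct)
  case less
  have IH: "Del P' v' z' Q' = 0" if "length P' + length Q' < length P + length Q" for P' v' z' Q'
    using less that by blast
  define B1 where "B1 = (\<lambda>pre g. wk (fin \<kappa>) (pre @ [e g v, z]) [] Q)"
  define B2 where "B2 = (\<lambda>pre g. wk (fin \<kappa>) (pre @ [e g v]) [z] Q)"
  define B3 where "B3 = (\<lambda>pre g. wk (fin \<kappa>) (pre @ [e (g @ [v]) z]) [] Q)"
  define B4 where "B4 = (\<lambda>pre g. wk (fin \<kappa>) pre (g @ [v, z]) Q)"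
  define Gp where "Gp = (\<lambda>pre g. wk (fin (Gam pre (e g v) z)) [] [] Q)"
  define Dp where "Dp = (\<lambda>pre g. wk (fin (Del pre (e g v) z)) [] [] Q)"
  have pt: "wk (fin \<kappa>) (pre @ [e g v * z]) [] Q = B1 pre g + Gp pre g + B2 pre g + Dp pre g" for pre g
  proof -
    define V where "V = e g v"
    have "wk (fin \<kappa>) (pre @ [V * z]) [] Q = wk (fin (\<lambda>L. \<kappa> (pre @ (V * z) # L))) [] [] Q"
      using wk_fin_pre[of \<kappa> "pre @ [V * z]" "[]" Q] by simp
    also have "(\<lambda>L. \<kappa> (pre @ (V * z) # L)) = (\<lambda>L. \<kappa> (pre @ V # z # L) + Gam pre V z L + Bet pre V z L + Del pre V z L)"
      by (simp add: fun_eq_iff Del_def)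
    also have "wk (fin (\<lambda>L. \<kappa> (pre @ V # z # L) + Gam pre V z L + Bet pre V z L + Del pre V z L)) [] [] Q
        = wk (fin (\<lambda>L. \<kappa> (pre @ V # z # L))) [] [] Q + wk (fin (Gam pre V z)) [] [] Q
          + wk (fin (Bet pre V z)) [] [] Q + wk (fin (Del pre V z)) [] [] Q"
      by (simp add: wk_fin_add)
    also have "wk (fin (\<lambda>L. \<kappa> (pre @ V # z # L))) [] [] Q = B1 pre g"
      using wk_fin_pre[of \<kappa> "pre @ [V, z]" "[]" Q] by (simp add: B1_def V_def)
    also have "wk (fin (Bet pre V z)) [] [] Q = B2 pre g"
    proof -
      have "Bet pre V z = Fst (\<lambda>A c B. \<kappa> ((pre @ [V]) @ lact (\<kappa> (z # A)) c # B))"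
        by (simp add: fun_eq_iff Bet_def)
      then show ?thesis using CB[of "pre @ [V]" z Q] by (simp add: B2_def V_def)
    qed
    finally show ?thesis by (simp add: Gp_def Dp_def V_def)
  qed
  have gi: "wk (fin \<kappa>) pre (g @ [v * z]) Q = B4 pre g" for pre g
    unfolding B4_def by (rule wk_gap_inv) auto
  have "M (P @ (v * z) # Q) = wk (fin \<kappa>) [] [] (P @ (v * z) # Q)" by (rule R) simp
  also have "\<dots> = wk (\<lambda>pre g. wk (fin \<kappa>) pre g ((v * z) # Q)) [] [] P" by (rule wk_append)
  also have "\<dots> = wk (\<lambda>pre g. B1 pre g + Gp pre g + B2 pre g + Dp pre g + B4 pre g) [] [] P"
    by (simp add: e_times pt gi)
  also have "\<dots> = wk B1 [] [] P + wk Gp [] [] P + wk B2 [] [] P + wk Dp [] [] P + wk B4 [] [] P"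
    by (simp add: wk_add)
  finally have Mw': "M (P @ (v * z) # Q) = wk B1 [] [] P + wk Gp [] [] P + wk B2 [] [] P + wk Dp [] [] P + wk B4 [] [] P" .
  have "M (P @ v # z # Q) = wk (fin \<kappa>) [] [] (P @ v # z # Q)" by (rule R) simp
  also have "\<dots> = wk (\<lambda>pre g. wk (fin \<kappa>) pre g (v # z # Q)) [] [] P" by (rule wk_append)
  also have "\<dots> = wk (\<lambda>pre g. B1 pre g + B2 pre g + B3 pre g + B4 pre g) [] [] P"
    by (simp add: B1_def B2_def B3_def B4_def add.assoc)
  also have "\<dots> = wk B1 [] [] P + wk B2 [] [] P + wk B3 [] [] P + wk B4 [] [] P"
    by (simp add: wk_add)
  finally have Mw: "M (P @ v # z # Q) = wk B1 [] [] P + wk B2 [] [] P + wk B3 [] [] P + wk B4 [] [] P" .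
  have "M (P @ (v * z) # Q) = M (P @ v # z # Q)" by (simp add: M_def mult.assoc)
  moreover have "wk Gp [] [] P = wk B3 [] [] P"
    unfolding Gp_def B3_def by (rule CG)
  ultimately have D0: "wk Dp [] [] P = 0"
    using Mw Mw' by (simp add: algebra_simps)
  have top: "wk (fin (Del P' v' z)) [] [] Q = Del P' v' z Q" if "length P' = length P" for P' v'
    by (rule wk_top_fin) (use IH that in auto)
  show ?case
  proof (cases "P = []")
    case True
    then show ?thesis using D0 top[of "[]" v] by (simp add: Dp_def)
  next
    case False
    have "wk Dp [] [] P = Dp ([] @ P) []"
    proof (rule wk_top[OF False])
      fix pre h :: "'a list" assume l: "length pre < length ([]::'a list) + length P"
      show "Dp pre h = 0"
        unfolding Dp_def
      proof -
        have "wk (fin (Del pre (e h v) z)) [] [] Q = wk (\<lambda>L h. 0) [] [] Q"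
        proof (rule wk_cong)
          fix L h' :: "'a list" assume "length L \<le> length ([]::'a list) + length Q"
          then show "fin (Del pre (e h v) z) L h' = 0" using IH l by (simp add: fin_def)
        qed
        then show "wk (fin (Del pre (e h v) z)) [] [] Q = 0" by (simp add: wk_zero)
      qed
    qed
    then show ?thesis using D0 top[of P v] by (simp add: Dp_def)
  qed
qed

end


lemma SS_ends:
  assumes "xs \<noteq> []" "\<And>a b. xs = a @ b \<Longrightarrow> a \<noteq> [] \<Longrightarrow> b \<noteq> [] \<Longrightarrow> f a b = (0::'b::comm_monoid_add)"
  shows "SS f xs = f [] xs + f xs []"
proof -
  have "SS f xs = (\<Sum>k\<le>length xs. f (take k xs) (drop k xs))" by (simp add: SS_def)
  also have "\<dots> = (\<Sum>k\<in>{0, length xs}. f (take k xs) (drop k xs))"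
  proof (rule sum.mono_neutral_right)
    show "\<forall>i\<in>{..length xs} - {0, length xs}. f (take i xs) (drop i xs) = 0"
    proof
      fix i assume i: "i \<in> {..length xs} - {0, length xs}"
      then have "take i xs \<noteq> []" "drop i xs \<noteq> []" by auto
      then show "f (take i xs) (drop i xs) = 0" using assms(2)[of "take i xs" "drop i xs"] by simp
    qed
  qed auto
  also have "\<dots> = f [] xs + f xs []" using assms(1) by simp
  finally show ?thesis .
qed

lemma SS_only_last:
  assumes "\<And>a b. xs = a @ b \<Longrightarrow> b \<noteq> [] \<Longrightarrow> f a b = (0::'b::comm_monoid_add)"
  shows "SS f xs = f xs []"
proof -
  have "SS f xs = (\<Sum>k\<le>length xs. f (take k xs) (drop k xs))" by (simp add: SS_def)
  also have "\<dots> = (\<Sum>k\<in>{length xs}. f (take k xs) (drop k xs))"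
  proof (rule sum.mono_neutral_right)
    show "\<forall>i\<in>{..length xs} - {length xs}. f (take i xs) (drop i xs) = 0"
    proof
      fix i assume i: "i \<in> {..length xs} - {length xs}"
      then have "drop i xs \<noteq> []" by auto
      then show "f (take i xs) (drop i xs) = 0" using assms[of "take i xs" "drop i xs"] by simp
    qed
  qed auto
  finally show ?thesis by simp
qed

context cum
begin

lemma Fst_zero:
  assumes "\<And>A c B. xs = A @ c # B \<Longrightarrow> f A c B = (0::'c::comm_monoid_add)"
  shows "Fst f xs = 0"
  unfolding Fst_index
proof (rule sum.neutral, rule ballI)
  fix k assume "k \<in> {..<length xs}"
  then have "xs = take k xs @ xs ! k # drop (Suc k) xs" by (simp add: id_take_nth_drop)
  then show "f (take k xs) (xs ! k) (drop (Suc k) xs) = 0" by (rule assms)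
qed

lemma SS_map: "SS f (map g xs) = SS (\<lambda>a b. f (map g a) (map g b)) xs"
  by (simp add: SS_def take_map drop_map)

lemma Fst_map: "Fst f (map g xs) = Fst (\<lambda>a c r. f (map g a) (g c) (map g r)) xs"
  by (simp add: Fst_index take_map drop_map)


lemma wk_vanish_fin:
  assumes "Q \<noteq> []" "\<And>L. L \<noteq> [] \<Longrightarrow> length L \<le> length Q \<Longrightarrow> D L = 0"
  shows "wk (fin D) [] [] Q = 0"
proof -
  obtain x Q' where Q: "Q = x # Q'" using assms(1) by (cases Q) auto
  have "wk (fin D) [x] [] Q' = 0"
    by (rule wk_vanish_inv) (use assms Q in \<open>auto simp: fin_def\<close>)
  moreover have "wk (fin D) [] [x] Q' = 0"
    by (rule wk_vanish_inv) (use assms Q in \<open>auto simp: fin_def\<close>)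
  ultimately show ?thesis using Q by simp
qed

lemma wk_top_fin2:
  assumes "\<And>L. L \<noteq> [] \<Longrightarrow> length L < length Q \<Longrightarrow> D L = 0"
  shows "wk (fin D) [] [] Q = D Q"
proof (cases "Q = []")
  case True then show ?thesis by simp
next
  case False
  have "wk (fin D) [] [] Q = fin D ([] @ Q) []"
    by (rule wk_top[OF False]) (use assms in \<open>auto simp: fin_def\<close>)
  then show ?thesis by simp
qed

lemma ract_eq: "u * lact x 1 = ract u x"
proof -
  have "ract u x * 1 = u * lact x 1"
    using bps unfolding B_prob_space_def by meson
  then show ?thesis by simp
qed

lemma E_ract: "E (ract u x) = E u * x"
  using E_lr[of 1 u x] by simp

lemma M_snoc_B: "M (P @ [lact \<beta> 1]) = M P * \<beta>"
  by (simp add: M_def ract_eq E_ract)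

lemma kappa_B1: "\<kappa> [lact \<beta> 1] = \<beta>"
  by (simp add: kappa_single E_lact)

lemma F3: "2 \<le> length P + length Q + 1 \<Longrightarrow> \<kappa> (P @ lact \<beta> 1 # Q) = 0"
proof (induction "length P + length Q" arbitrary: P Q \<beta> rule: less_induct)
  case less
  have IH: "\<kappa> (P' @ lact \<beta>' 1 # Q') = 0" if "2 \<le> length P' + length Q' + 1" "length P' + length Q' < length P + length Q" for P' Q' \<beta>'
    using less.hyps that by blast
  show ?case
  proof (cases Q)
    case (Cons z Q')
    have d: "Del P (lact \<beta> 1) z Q' = 0" by (rule F5)
    have g: "Gam P (lact \<beta> 1) z Q' = \<kappa> (P @ lact \<beta> z # Q')"
      unfolding Gam_def
    proof (subst SS_only_last)
      fix A B assume AB: "P = A @ B" "B \<noteq> []"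
      have l1: "2 \<le> length B + length ([]::'a list) + 1" using AB by (cases B) auto
      have l2: "length B + length ([]::'a list) < length P + length Q" using AB Cons by simp
      have "\<kappa> (B @ [lact \<beta> 1]) = 0"
        using IH[OF l1 l2, of \<beta>] by simp
      then show "\<kappa> (A @ lact (\<kappa> (B @ [lact \<beta> 1])) z # Q') = 0" by (simp add: kappa_zero)
    qed (simp add: kappa_B1)
    have bt: "Bet P (lact \<beta> 1) z Q' = 0"
      unfolding Bet_def
    proof (rule Fst_zero)
      fix A c B assume q: "Q' = A @ c # B"
      have "2 \<le> length P + length (lact (\<kappa> (z # A)) c # B) + 1" by simp
      moreover have "length P + length (lact (\<kappa> (z # A)) c # B) < length P + length Q"
        using q Cons by simp
      ultimately show "\<kappa> (P @ lact \<beta> 1 # lact (\<kappa> (z # A)) c # B) = 0"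
        by (rule IH)
    qed
    have "\<kappa> (P @ (lact \<beta> 1 * z) # Q') - \<kappa> (P @ lact \<beta> 1 # z # Q') - Gam P (lact \<beta> 1) z Q' - Bet P (lact \<beta> 1) z Q' = 0"
      using d unfolding Del_def .
    then have "\<kappa> (P @ lact \<beta> 1 # z # Q') = 0" unfolding g bt lact_one_times by simp
    then show ?thesis using Cons by simp
  next
    case Nil
    then have Pne: "P \<noteq> []" using less.prems by auto
    have "M (P @ [lact \<beta> 1]) = wk (fin \<kappa>) [] [] (P @ [lact \<beta> 1])" by (rule R) simp
    also have "\<dots> = SS (\<lambda>Q1 g. wk (fin (\<lambda>pre. \<kappa> (pre @ [e g (lact \<beta> 1)]))) [] [] Q1) P"
      by (rule wk_last)
    also have "\<dots> = wk (fin (\<lambda>pre. \<kappa> (pre @ [e P (lact \<beta> 1)]))) [] [] []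
                   + wk (fin (\<lambda>pre. \<kappa> (pre @ [e [] (lact \<beta> 1)]))) [] [] P"
    proof (rule SS_ends[OF Pne])
      fix A B assume AB: "P = A @ B" "A \<noteq> []" "B \<noteq> []"
      show "wk (fin (\<lambda>pre. \<kappa> (pre @ [e B (lact \<beta> 1)]))) [] [] A = 0"
      proof (rule wk_vanish_fin[OF AB(2)])
        fix L :: "'a list" assume L: "L \<noteq> []" "length L \<le> length A"
        have l1: "2 \<le> length L + length ([]::'a list) + 1" using L by (cases L) auto
        have "length B > 0" using AB by simp
        then have "length L < length A + length B" using L(2) by linarith
        then have l2: "length L + length ([]::'a list) < length P + length Q" using AB Nil by simp
        show "\<kappa> (L @ [e B (lact \<beta> 1)]) = 0"
          using IH[OF l1 l2, of "M B * \<beta>"] by (simp add: e_def lact_mult[symmetric])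
      qed
    qed
    also have "wk (fin (\<lambda>pre. \<kappa> (pre @ [e P (lact \<beta> 1)]))) [] [] [] = M P * \<beta>"
      by (simp add: e_def lact_mult[symmetric] kappa_B1)
    also have "wk (fin (\<lambda>pre. \<kappa> (pre @ [e [] (lact \<beta> 1)]))) [] [] P = \<kappa> (P @ [e [] (lact \<beta> 1)])"
    proof (rule wk_top_fin2)
      fix L :: "'a list" assume L: "L \<noteq> []" "length L < length P"
      have l1: "2 \<le> length L + length ([]::'a list) + 1" using L by (cases L) auto
      have l2: "length L + length ([]::'a list) < length P + length Q" using L Nil by simp
      show "\<kappa> (L @ [e [] (lact \<beta> 1)]) = 0" using IH[OF l1 l2, of \<beta>] by simp
    qed
    finally have "M P * \<beta> = M P * \<beta> + \<kappa> (P @ [e [] (lact \<beta> 1)])"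
      unfolding M_snoc_B .
    then have "M P * \<beta> + 0 = M P * \<beta> + \<kappa> (P @ [e [] (lact \<beta> 1)])"
      by (subst add_0_right)
    then have "0 = \<kappa> (P @ [e [] (lact \<beta> 1)])" by (rule add_left_imp_eq)
    then have "\<kappa> (P @ [e [] (lact \<beta> 1)]) = 0" by (rule sym)
    then show ?thesis using Nil by simp
  qed
qed

end


context cum
begin

lemma wk_free_aux:
  assumes inf: "\<And>i j. i < j \<Longrightarrow> j \<le> length V \<Longrightarrow> M (drop i (take j V)) = 0"
  shows "i \<le> k \<Longrightarrow> k \<le> length V \<Longrightarrow>
    wk (fin \<kappa>) P (drop i (take k V)) (drop k V) = (if i = k then \<kappa> (P @ drop k V) else 0)"
proof (induction "length V - k" arbitrary: k i P)
  case 0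
  then have k: "k = length V" by simp
  show ?case using 0 k by (auto simp: fin_def)
next
  case (Suc d)
  then have kl: "k < length V" by simp
  have dk: "drop k V = V ! k # drop (Suc k) V" using kl by (simp add: Cons_nth_drop_Suc)
  have g1: "drop (Suc k) (take (Suc k) V) = []" by simp
  have g2: "drop i (take k V) @ [V ! k] = drop i (take (Suc k) V)"
    using kl Suc.prems by (simp add: take_Suc_conv_app_nth)
  have ih1: "wk (fin \<kappa>) (P @ [e (drop i (take k V)) (V ! k)]) [] (drop (Suc k) V)
      = \<kappa> (P @ e (drop i (take k V)) (V ! k) # drop (Suc k) V)"
    using Suc.hyps(1)[of "Suc k" "Suc k" "P @ [e (drop i (take k V)) (V ! k)]"] Suc.hyps(2) kl
    by (simp add: g1)
  have ih2: "wk (fin \<kappa>) P (drop i (take k V) @ [V ! k]) (drop (Suc k) V) = 0"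
    using Suc.hyps(1)[of "Suc k" i P] Suc.hyps(2) Suc.prems kl by (simp add: g2)
  show ?case
  proof (cases "i = k")
    case True
    then show ?thesis using ih1 ih2 dk by simp
  next
    case False
    then have "M (drop i (take k V)) = 0" using inf Suc.prems kl by simp
    then have "e (drop i (take k V)) (V ! k) = 0" by (simp add: e_def)
    then show ?thesis using ih1 ih2 dk False by (simp add: kappa_zero)
  qed
qed

lemma M_eq_kappa_free:
  assumes "\<And>i j. i < j \<Longrightarrow> j \<le> length V \<Longrightarrow> M (drop i (take j V)) = 0" "V \<noteq> []"
  shows "M V = \<kappa> V"
  using R[OF assms(2)] wk_free_aux[OF assms(1), of 0 0 "[]"] by simp

end

locale free_cum = cum smB smA lact ract E \<kappa>
  for smB :: "'k::field_char_0 \<Rightarrow> 'b::ring_1 \<Rightarrow> 'b"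
    and smA :: "'k \<Rightarrow> 'a::ring_1 \<Rightarrow> 'a"
    and lact :: "'b \<Rightarrow> 'a \<Rightarrow> 'a" and ract :: "'a \<Rightarrow> 'b \<Rightarrow> 'a"
    and E :: "'a \<Rightarrow> 'b" and \<kappa> :: "'a list \<Rightarrow> 'b" +
  fixes a b :: 'a
  assumes fr: "free_pair smA lact ract E a b"
begin

abbreviation G :: "bool \<Rightarrow> 'a set" where
  "G l \<equiv> B_gen smA lact ract (if l then a else b)"

lemma G_mult: "x \<in> G l \<Longrightarrow> z \<in> G l \<Longrightarrow> x * z \<in> G l"
  by (rule B_gen.gen_mult)
lemma G_lact: "x \<in> G l \<Longrightarrow> lact c x \<in> G l"
  by (rule B_gen.gen_lact)
lemma G_lact1: "lact c 1 \<in> G l"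
  by (rule B_gen.gen_lact, rule B_gen.gen_one)
lemma G_diff: "x \<in> G l \<Longrightarrow> x - lact c 1 \<in> G l"
proof -
  assume "x \<in> G l"
  moreover have "lact (- c) 1 \<in> G l" by (rule G_lact1)
  ultimately have "x + lact (- c) 1 \<in> G l" by (rule B_gen.gen_add)
  then show ?thesis by (simp add: lact_minus1)
qed

definition goodw :: "(bool \<times> 'a) list \<Rightarrow> bool" where
  "goodw w \<longleftrightarrow> (\<forall>p\<in>set w. snd p \<in> G (fst p))"
definition mixed :: "(bool \<times> 'a) list \<Rightarrow> bool" where
  "mixed w \<longleftrightarrow> True \<in> fst ` set w \<and> False \<in> fst ` set w"

lemma pure_labels:
  assumes "\<not> mixed W" "l \<in> fst ` set W"
  shows "fst ` set W \<subseteq> {l}"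
proof
  fix t assume t: "t \<in> fst ` set W"
  show "t \<in> {l}"
  proof (rule ccontr)
    assume "t \<notin> {l}"
    then have "t = (\<not> l)" by auto
    then show False using assms t unfolding mixed_def by (cases l) auto
  qed
qed

lemma two_block:
  assumes IH: "\<And>w'. length w' < length w \<Longrightarrow> goodw w' \<Longrightarrow> mixed w' \<Longrightarrow> \<kappa> (map snd w') = 0"
    and mw: "mixed w"
    and gi: "goodw Wi" and li: "length Wi < length w" and ii: "l \<in> fst ` set Wi"
    and y: "y \<in> G l'"
    and go: "goodw (Wo1 @ Wo2)" and lo: "length Wo1 + length Wo2 + 1 < length w"
    and io: "l \<in> fst ` set (Wo1 @ (l', y) # Wo2)"
    and cov: "fst ` set w \<subseteq> fst ` set Wi \<union> fst ` set (Wo1 @ (l', y) # Wo2)"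
  shows "\<kappa> (map snd Wo1 @ lact (\<kappa> (map snd Wi)) y # map snd Wo2) = 0"
proof (cases "mixed Wi")
  case True
  then have "\<kappa> (map snd Wi) = 0" using IH[OF li gi] by blast
  then show ?thesis by (simp add: kappa_zero)
next
  case False
  define Wo where "Wo = Wo1 @ (l', lact (\<kappa> (map snd Wi)) y) # Wo2"
  have gWo: "goodw Wo"
    unfolding goodw_def Wo_def
  proof
    fix p assume "p \<in> set (Wo1 @ (l', lact (\<kappa> (map snd Wi)) y) # Wo2)"
    then have "p \<in> set (Wo1 @ Wo2) \<or> p = (l', lact (\<kappa> (map snd Wi)) y)" by auto
    then show "snd p \<in> G (fst p)"
    proof
      assume "p \<in> set (Wo1 @ Wo2)" then show ?thesis using go unfolding goodw_def by blast
    next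
      assume "p = (l', lact (\<kappa> (map snd Wi)) y)" then show ?thesis using G_lact[OF y] by simp
    qed
  qed
  have sWo: "fst ` set Wo = fst ` set (Wo1 @ (l', y) # Wo2)" by (simp add: Wo_def)
  show ?thesis
  proof (cases "mixed Wo")
    case True
    have "length Wo < length w" using lo by (simp add: Wo_def)
    then have "\<kappa> (map snd Wo) = 0" using IH[OF _ gWo True] by blast
    then show ?thesis by (simp add: Wo_def)
  next
    case False
    have "fst ` set Wi \<subseteq> {l}" using pure_labels[OF \<open>\<not> mixed Wi\<close> ii] .
    moreover have "fst ` set Wo \<subseteq> {l}" using pure_labels[OF False] io sWo by simp
    ultimately have "fst ` set Wi \<union> fst ` set Wo \<subseteq> {l}" by (rule Un_least)
    moreover have "fst ` set w \<subseteq> fst ` set Wi \<union> fst ` set Wo" using cov unfolding sWo .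
    ultimately have "fst ` set w \<subseteq> {l}" by (rule subset_trans[rotated])
    then have "True \<in> {l} \<and> False \<in> {l}" using mw unfolding mixed_def by (meson subsetD)
    then show ?thesis by simp
  qed
qed

lemma free_infix:
  assumes "goodw w" "\<forall>p\<in>set w. E (snd p) = 0"
    and alt: "\<And>k. Suc k < length w \<Longrightarrow> fst (w ! k) \<noteq> fst (w ! Suc k)"
    and "i < j" "j \<le> length w"
  shows "M (drop i (take j (map snd w))) = 0"
proof -
  define W where "W = drop i (take j w)"
  have h1: "W \<noteq> []" using assms by (simp add: W_def)
  have h2: "\<forall>(l, z)\<in>set W. E z = 0 \<and> z \<in> B_gen smA lact ract (if l then a else b)"
  proof (intro ballI, clarify)
    fix l z assume "(l, z) \<in> set W"
    then have "(l, z) \<in> set w" unfolding W_def by (meson in_set_dropD in_set_takeD)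
    then show "E z = 0 \<and> z \<in> B_gen smA lact ract (if l then a else b)"
      using assms(1,2) unfolding goodw_def by force
  qed
  have h3: "\<forall>k. Suc k < length W \<longrightarrow> fst (W ! k) \<noteq> fst (W ! Suc k)"
  proof (intro allI impI)
    fix k assume k: "Suc k < length W"
    have "W ! k = w ! (i + k)" "W ! Suc k = w ! Suc (i + k)" using k assms(4,5) by (auto simp: W_def)
    moreover have "Suc (i + k) < length w" using k assms(4,5) by (simp add: W_def)
    ultimately show "fst (W ! k) \<noteq> fst (W ! Suc k)" using alt by simp
  qed
  have "E (prod_list (map snd W)) = 0"
  proof (rule fr[unfolded free_pair_def, rule_format])
    show "W \<noteq> []" by (rule h1)
    show "\<And>x. x \<in> set W \<Longrightarrow> case x of (j, z) \<Rightarrow> E z = 0 \<and> z \<in> G j" using h2 by blast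
    show "\<And>i. Suc i < length W \<Longrightarrow> fst (W ! i) \<noteq> fst (W ! Suc i)" using h3 by blast
  qed
  then show ?thesis by (simp add: W_def M_def drop_map take_map)
qed

end


context free_cum
begin

lemma goodw_append[simp]: "goodw (xs @ ys) \<longleftrightarrow> goodw xs \<and> goodw ys"
  by (auto simp: goodw_def)
lemma goodw_Cons[simp]: "goodw (p # xs) \<longleftrightarrow> snd p \<in> G (fst p) \<and> goodw xs"
  by (auto simp: goodw_def)
lemma goodw_Nil[simp]: "goodw []"
  by (simp add: goodw_def)

lemma mixed_length:
  assumes that: "mixed w" shows "2 \<le> length w"
proof (cases w)
  case Nil then show ?thesis using that by (simp add: mixed_def)
next
  case (Cons p w')
  show ?thesis
  proof (cases w')
    case Nil then show ?thesis using that Cons by (auto simp: mixed_def)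
  next
    case (Cons q w'') then show ?thesis using \<open>w = p # w'\<close> by simp
  qed
qed

lemma E_cen: "E (u - lact (E u) 1) = 0"
  by (simp add: E_diff E_lact)

lemma core: "goodw w \<Longrightarrow> mixed w \<Longrightarrow> \<kappa> (map snd w) = 0"
proof (induction "length w" arbitrary: w rule: less_induct)
  case less
  have IH: "\<And>w'. length w' < length w \<Longrightarrow> goodw w' \<Longrightarrow> mixed w' \<Longrightarrow> \<kappa> (map snd w') = 0"
    using less.hyps by blast
  show ?case
  proof (cases "\<exists>k. Suc k < length w \<and> fst (w ! k) = fst (w ! Suc k)")
    case True
    then obtain k where k: "Suc k < length w" "fst (w ! k) = fst (w ! Suc k)" by blast
    define Wp where "Wp = take k w"
    define Wq where "Wq = drop (Suc (Suc k)) w"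
    define l where "l = fst (w ! k)"
    define x where "x = snd (w ! k)"
    define z where "z = snd (w ! Suc k)"
    have wk1: "w ! k = (l, x)" by (simp add: l_def x_def)
    have wk2: "w ! Suc k = (l, z)" using k(2) by (simp add: l_def z_def)
    have wdec: "w = Wp @ (l, x) # (l, z) # Wq"
    proof -
      have "w = take k w @ w ! k # drop (Suc k) w" using k by (simp add: id_take_nth_drop)
      also have "drop (Suc k) w = w ! Suc k # drop (Suc (Suc k)) w" using k by (simp add: Cons_nth_drop_Suc)
      finally show ?thesis by (simp add: Wp_def Wq_def wk1 wk2)
    qed
    have gw: "goodw w" by (rule less.prems(1))
    then have gx: "x \<in> G l" and gz: "z \<in> G l" and gp: "goodw Wp" and gq: "goodw Wq"
      by (subst (asm) wdec, simp)+
    have mw: "mixed w" by (rule less.prems(2))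
    define P where "P = map snd Wp"
    define Q where "Q = map snd Wq"
    have mapw: "map snd w = P @ x # z # Q" by (subst wdec) (simp add: P_def Q_def)
    have zero': "\<kappa> (P @ (x * z) # Q) = 0"
    proof -
      have "\<kappa> (map snd (Wp @ (l, x * z) # Wq)) = 0"
      proof (rule IH)
        show "length (Wp @ (l, x * z) # Wq) < length w" by (subst wdec) simp
        show "goodw (Wp @ (l, x * z) # Wq)" using gp gq G_mult[OF gx gz] by simp
        have "fst ` set (Wp @ (l, x * z) # Wq) = fst ` set w" by (subst wdec) auto
        then show "mixed (Wp @ (l, x * z) # Wq)" using mw unfolding mixed_def by simp
      qed
      then show ?thesis by (simp add: P_def Q_def)
    qed
    have gam: "Gam P x z Q = 0"
    proof -
      have "Gam P x z Q = SS (\<lambda>Wa Wb. \<kappa> (map snd Wa @ lact (\<kappa> (map snd Wb @ [x])) z # Q)) Wp"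
        unfolding Gam_def P_def by (rule SS_map)
      also have "\<dots> = SS (\<lambda>Wa Wb. 0) Wp"
      proof (rule SS_cong)
        fix Wa Wb assume ab: "Wp = Wa @ Wb"
        have "\<kappa> (map snd Wa @ lact (\<kappa> (map snd (Wb @ [(l, x)]))) z # map snd Wq) = 0"
        proof (rule two_block[OF IH mw])
          show "goodw (Wb @ [(l, x)])" using gp gx ab by simp
          show "length (Wb @ [(l, x)]) < length w" using ab by (subst wdec) simp
          show "l \<in> fst ` set (Wb @ [(l, x)])" by simp
          show "z \<in> G l" by (rule gz)
          show "goodw (Wa @ Wq)" using gp gq ab by simp
          show "length Wa + length Wq + 1 < length w" using ab by (subst wdec) simp
          show "l \<in> fst ` set (Wa @ (l, z) # Wq)" by simp
          show "fst ` set w \<subseteq> fst ` set (Wb @ [(l, x)]) \<union> fst ` set (Wa @ (l, z) # Wq)"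
            using ab by (subst wdec) auto
        qed
        then show "\<kappa> (map snd Wa @ lact (\<kappa> (map snd Wb @ [x])) z # Q) = 0" by (simp add: Q_def)
      qed
      finally show ?thesis by (simp add: SS_zero)
    qed
    have bet: "Bet P x z Q = 0"
    proof -
      have "Bet P x z Q = Fst (\<lambda>Wa pc Wb. \<kappa> (P @ x # lact (\<kappa> (z # map snd Wa)) (snd pc) # map snd Wb)) Wq"
        unfolding Bet_def Q_def by (rule Fst_map)
      also have "\<dots> = 0"
      proof (rule Fst_zero)
        fix Wa pc Wb assume ab: "Wq = Wa @ pc # Wb"
        have "\<kappa> (map snd (Wp @ [(l, x)]) @ lact (\<kappa> (map snd ((l, z) # Wa))) (snd pc) # map snd Wb) = 0"
        proof (rule two_block[OF IH mw])
          show "goodw ((l, z) # Wa)" using gq gz ab by simp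
          show "length ((l, z) # Wa) < length w" using ab by (subst wdec) simp
          show "l \<in> fst ` set ((l, z) # Wa)" by simp
          show "snd pc \<in> G (fst pc)" using gq ab by simp
          show "goodw ((Wp @ [(l, x)]) @ Wb)" using gp gq gx ab by simp
          show "length (Wp @ [(l, x)]) + length Wb + 1 < length w" using ab by (subst wdec) simp
          show "l \<in> fst ` set ((Wp @ [(l, x)]) @ (fst pc, snd pc) # Wb)" by simp
          show "fst ` set w \<subseteq> fst ` set ((l, z) # Wa) \<union> fst ` set ((Wp @ [(l, x)]) @ (fst pc, snd pc) # Wb)"
            using ab by (subst wdec) auto
        qed
        then show "\<kappa> (P @ x # lact (\<kappa> (z # map snd Wa)) (snd pc) # map snd Wb) = 0" by (simp add: P_def)
      qed
      finally show ?thesis .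
    qed
    have "Del P x z Q = 0" by (rule F5)
    then have "\<kappa> (P @ (x * z) # Q) - \<kappa> (P @ x # z # Q) - Gam P x z Q - Bet P x z Q = 0"
      unfolding Del_def .
    then have "\<kappa> (P @ x # z # Q) = 0" unfolding zero' gam bet by simp
    then show ?thesis unfolding mapw .
  next
    case False
    then have alt: "\<And>k. Suc k < length w \<Longrightarrow> fst (w ! k) \<noteq> fst (w ! Suc k)" by blast
    have n2: "2 \<le> length w" using mixed_length less.prems(2) .
    define cen :: "bool \<times> 'a \<Rightarrow> bool \<times> 'a" where "cen = (\<lambda>p. (fst p, snd p - lact (E (snd p)) 1))"
    have ck: "k \<le> length w \<Longrightarrow> \<kappa> (map snd w) = \<kappa> (map snd (map cen (take k w) @ drop k w))" for k
    proof (induction k)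
      case 0 then show ?case by simp
    next
      case (Suc k)
      then have kl: "k < length w" by simp
      define A where "A = map snd (map cen (take k w))"
      define B where "B = map snd (drop (Suc k) w)"
      define u where "u = snd (w ! k)"
      have e1: "map snd (map cen (take k w) @ drop k w) = A @ u # B"
        using kl by (simp add: A_def B_def u_def Cons_nth_drop_Suc[symmetric])
      have e2: "map snd (map cen (take (Suc k) w) @ drop (Suc k) w) = A @ (u - lact (E u) 1) # B"
        using kl by (simp add: A_def B_def u_def take_Suc_conv_app_nth cen_def)
      have "\<kappa> (A @ lact (E u) 1 # B) = 0"
      proof (rule F3)
        have "length A + length B + 1 = length w" using kl by (simp add: A_def B_def)
        then show "2 \<le> length A + length B + 1" using n2 by simp
      qed
      then have "\<kappa> (A @ (u - lact (E u) 1) # B) = \<kappa> (A @ u # B)" by (simp add: kappa_diff)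
      then show ?case using Suc e1 e2 kl by simp
    qed
    define w0 where "w0 = map cen w"
    have k0: "\<kappa> (map snd w) = \<kappa> (map snd w0)" using ck[of "length w"] by (simp add: w0_def)
    have g0: "goodw w0" using less.prems(1) G_diff unfolding goodw_def w0_def cen_def by auto
    have E0: "\<forall>p\<in>set w0. E (snd p) = 0" by (auto simp: w0_def cen_def E_cen)
    have alt0: "\<And>k. Suc k < length w0 \<Longrightarrow> fst (w0 ! k) \<noteq> fst (w0 ! Suc k)"
      using alt by (simp add: w0_def cen_def)
    have inf: "\<And>i j. i < j \<Longrightarrow> j \<le> length (map snd w0) \<Longrightarrow> M (drop i (take j (map snd w0))) = 0"
      using free_infix[OF g0 E0 alt0] by simp
    have ne: "map snd w0 \<noteq> []" using n2 by (auto simp: w0_def)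
    have "M (map snd w0) = \<kappa> (map snd w0)" by (rule M_eq_kappa_free[OF inf ne])
    moreover have "M (map snd w0) = 0" using inf[of 0 "length w0"] n2 ne by (simp add: w0_def)
    ultimately show ?thesis using k0 by simp
  qed
qed

end


context free_cum
begin

primrec SL :: "nat \<Rightarrow> ptree \<Rightarrow> 'a list \<Rightarrow> (bool \<times> 'a) list" where
  "SL off Leaf as = []"
| "SL off (Node l r) as = (even (off + tsize l), lact (kappa_tree lact \<kappa> l (take (tsize l) as)) (as ! tsize l))
     # SL (off + tsize l + 1) r (drop (tsize l + 1) as)"

lemma SL_map: "map snd (SL off t as) = spine_args lact \<kappa> t as"
proof (induction t arbitrary: off as)
  case Leaf then show ?case by simp
next
  case (Node l r)
  show ?case unfolding SL.simps list.map spine_Node Node.IH by simp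
qed

lemma SL_good:
  "length as = tsize t \<Longrightarrow> (\<forall>k<length as. as ! k \<in> G (even (off + k))) \<Longrightarrow> goodw (SL off t as)"
proof (induction t arbitrary: off as)
  case Leaf then show ?case by simp
next
  case (Node l r)
  have "as ! tsize l \<in> G (even (off + tsize l))" using Node.prems by simp
  then have 1: "lact (kappa_tree lact \<kappa> l (take (tsize l) as)) (as ! tsize l) \<in> G (even (off + tsize l))"
    by (rule G_lact)
  have 2: "goodw (SL (off + tsize l + 1) r (drop (tsize l + 1) as))"
  proof (rule Node.IH(2))
    show "length (drop (tsize l + 1) as) = tsize r" using Node.prems by simp
    show "\<forall>k<length (drop (tsize l + 1) as). drop (tsize l + 1) as ! k \<in> G (even (off + tsize l + 1 + k))"
    proof (intro allI impI)
      fix k assume k: "k < length (drop (tsize l + 1) as)"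
      then have "tsize l + 1 + k < length as" by simp
      then have "as ! (tsize l + 1 + k) \<in> G (even (off + (tsize l + 1 + k)))" using Node.prems by blast
      then show "drop (tsize l + 1) as ! k \<in> G (even (off + tsize l + 1 + k))"
        using k by (simp add: add.assoc)
    qed
  qed
  show ?case using 1 2 by simp
qed

definition bad :: "(bool \<times> 'a) list \<Rightarrow> bool" where
  "bad W \<longleftrightarrow> (\<exists>P Q. map snd W = P @ 0 # Q) \<or> mixed W"

lemma KZ:
  assumes "t \<noteq> Leaf" "length as = tsize t" "\<forall>k<length as. as ! k \<in> G (even (off + k))"
    and "bad (SL off t as)"
  shows "kappa_tree lact \<kappa> t as = 0"
proof -
  obtain l r where t: "t = Node l r" using assms(1) by (cases t) auto
  have kt: "kappa_tree lact \<kappa> t as = \<kappa> (map snd (SL off t as))"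
    unfolding SL_map t by (rule kappa_tree_Node)
  show ?thesis
    using assms(4) unfolding bad_def
  proof
    assume "\<exists>P Q. map snd (SL off t as) = P @ 0 # Q"
    then show ?thesis using kt kappa_zero by auto
  next
    assume "mixed (SL off t as)"
    then show ?thesis using kt core SL_good[OF assms(2,3)] by simp
  qed
qed

lemma SL_bad:
  "length as = tsize t \<Longrightarrow> (\<forall>k<length as. as ! k \<in> G (even (off + k))) \<Longrightarrow>
   rchild off t x y \<Longrightarrow> even x \<noteq> even y \<Longrightarrow> bad (SL off t as)"
proof (induction t arbitrary: off as)
  case Leaf then show ?case by simp
next
  case (Node l r)
  define e0 where "e0 = lact (kappa_tree lact \<kappa> l (take (tsize l) as)) (as ! tsize l)"
  define rest where "rest = SL (off + tsize l + 1) r (drop (tsize l + 1) as)"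
  have sl: "SL off (Node l r) as = (even (off + tsize l), e0) # rest" by (simp add: e0_def rest_def)
  have lenr: "length (drop (tsize l + 1) as) = tsize r" using Node.prems by simp
  have memr: "\<forall>k<length (drop (tsize l + 1) as). drop (tsize l + 1) as ! k \<in> G (even (off + tsize l + 1 + k))"
  proof (intro allI impI)
    fix k assume k: "k < length (drop (tsize l + 1) as)"
    then have "tsize l + 1 + k < length as" by simp
    then have "as ! (tsize l + 1 + k) \<in> G (even (off + (tsize l + 1 + k)))" using Node.prems by blast
    then show "drop (tsize l + 1) as ! k \<in> G (even (off + tsize l + 1 + k))"
      using k by (simp add: add.assoc)
  qed
  have lenl: "length (take (tsize l) as) = tsize l" using Node.prems by simp
  have meml: "\<forall>k<length (take (tsize l) as). take (tsize l) as ! k \<in> G (even (off + k))"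
    using Node.prems by simp
  have edge: "(case r of Leaf \<Rightarrow> False | Node rl rr \<Rightarrow> y = off + tsize l + 1 \<and> x = off + tsize l + 1 + tsize rl + 1)
      \<or> rchild off l x y \<or> rchild (off + tsize l + 1) r x y"
    using Node.prems(3) by simp
  then consider (root) rl rr where "r = Node rl rr" "y = off + tsize l + 1" "x = off + tsize l + 1 + tsize rl + 1"
    | (left) "rchild off l x y" | (right) "rchild (off + tsize l + 1) r x y"
    by (cases r) auto
  then show ?case
  proof cases
    case root
    obtain e1 rest' where rest: "rest = (even (off + tsize l + 1 + tsize rl), e1) # rest'"
      by (simp add: rest_def root)
    have "even (off + tsize l) \<noteq> even (off + tsize l + 1 + tsize rl)"
      using Node.prems(4) root by auto
    then have "mixed (SL off (Node l r) as)"
      unfolding sl rest mixed_def by (cases "even (off + tsize l)") auto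
    then show ?thesis by (simp add: bad_def)
  next
    case left
    have "l \<noteq> Leaf" using left by auto
    have "bad (SL off l (take (tsize l) as))"
      by (rule Node.IH(1)[OF lenl meml left Node.prems(4)])
    then have "kappa_tree lact \<kappa> l (take (tsize l) as) = 0"
      by (rule KZ[OF \<open>l \<noteq> Leaf\<close> lenl meml])
    then have "e0 = 0" by (simp add: e0_def)
    then have "map snd (SL off (Node l r) as) = [] @ 0 # map snd rest" unfolding sl by simp
    then show ?thesis unfolding bad_def by blast
  next
    case right
    have "bad rest" unfolding rest_def
      by (rule Node.IH(2)[OF lenr memr right Node.prems(4)])
    then show ?thesis
      unfolding bad_def sl
    proof
      assume "\<exists>P Q. map snd rest = P @ 0 # Q"
      then obtain P Q where "map snd rest = P @ 0 # Q" by blast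
      then have "map snd ((even (off + tsize l), e0) # rest) = (e0 # P) @ 0 # Q" by simp
      then show "(\<exists>P Q. map snd ((even (off + tsize l), e0) # rest) = P @ 0 # Q) \<or> mixed ((even (off + tsize l), e0) # rest)"
        by blast
    next
      assume "mixed rest"
      then have "mixed ((even (off + tsize l), e0) # rest)" unfolding mixed_def by auto
      then show "(\<exists>P Q. map snd ((even (off + tsize l), e0) # rest) = P @ 0 # Q) \<or> mixed ((even (off + tsize l), e0) # rest)"
        by blast
    qed
  qed
qed

end

lemma splits_edge:
  assumes "\<not> splits t"
  shows "\<exists>x y. rchild 0 t x y \<and> even x \<noteq> even y"
proof (rule ccontr)
  assume "\<not> (\<exists>x y. rchild 0 t x y \<and> even x \<noteq> even y)"
  then have h: "\<And>x y. rchild 0 t x y \<Longrightarrow> even x = even y" by blast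
  have "(sup (rchild 0 t) (rchild 0 t)\<inverse>\<inverse>)\<^sup>*\<^sup>* x y \<Longrightarrow> even x = even y" for x y
  proof (induction rule: rtranclp_induct)
    case base then show ?case by simp
  next
    case (step y z)
    then have "rchild 0 t y z \<or> rchild 0 t z y" by auto
    then show ?case using step.IH h by auto
  qed
  then have "splits t" unfolding splits_def by blast
  then show False using assms by simp
qed

lemma word_len: "length (concat (map (\<lambda>i. [f i, g i]) is)) = 2 * length is"
  by (induction "is") auto

lemma word_nth:
  "k < 2 * length is \<Longrightarrow> concat (map (\<lambda>i. [f i, g i]) is) ! k =
     (if even k then f (is ! (k div 2)) else g (is ! (k div 2)))"
proof (induction "is" arbitrary: k)
  case Nil then show ?case by simp
next
  case (Cons i "is")
  show ?case
  proof (cases "k < 2")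
    case True
    then have "k = 0 \<or> k = 1" by auto
    then show ?thesis by auto
  next
    case False
    then obtain k' where k': "k = Suc (Suc k')" by (metis add_2_eq_Suc le_add_diff_inverse not_less)
    have "k' < 2 * length is" using Cons.prems k' by simp
    then show ?thesis using Cons.IH[of k'] k' by simp
  qed
qed



theorem lemma4:
  fixes smB :: "'k::field_char_0 \<Rightarrow> 'b::ring_1 \<Rightarrow> 'b"
    and smA :: "'k \<Rightarrow> 'a::ring_1 \<Rightarrow> 'a"
    and lact :: "'b \<Rightarrow> 'a \<Rightarrow> 'a" and ract :: "'a \<Rightarrow> 'b \<Rightarrow> 'a"
    and E :: "'a \<Rightarrow> 'b" and \<kappa> :: "'a list \<Rightarrow> 'b"
    and a b :: 'a and n :: nat and \<tau> :: ptree and x y :: "nat \<Rightarrow> 'b"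
  assumes "B_prob_space smB smA lact ract E"
    and "free_pair smA lact ract E a b"
    and "is_cumulants lact E \<kappa>"
    and "n \<ge> 1"
    and "\<tau> \<in> Y (2 * n)"
    and "\<not> splits \<tau>"
  shows "kappa_tree lact \<kappa> \<tau> (concat (map (\<lambda>i. [lact (x i) a, lact (y i) b]) [1..<n + 1])) = 0"
proof -
  interpret fc: free_cum smB smA lact ract E \<kappa> a b
    by unfold_locales (use assms in auto)
  define as where "as = concat (map (\<lambda>i. [lact (x i) a, lact (y i) b]) [1..<n + 1])"
  have len: "length as = 2 * n" unfolding as_def by (simp add: word_len)
  have ts: "tsize \<tau> = 2 * n" using assms(5) by (simp add: Y_def)
  have ne: "\<tau> \<noteq> Leaf" using ts assms(4) by auto
  have mem: "\<forall>k<length as. as ! k \<in> B_gen smA lact ract (if even (0 + k) then a else b)"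
  proof (intro allI impI)
    fix k assume k: "k < length as"
    then have k2: "k < 2 * length [1..<n + 1]" using len by simp
    show "as ! k \<in> B_gen smA lact ract (if even (0 + k) then a else b)"
      unfolding as_def word_nth[OF k2]
      by (auto intro: B_gen.gen_lact B_gen.gen_elem)
  qed
  obtain u v where uv: "rchild 0 \<tau> u v" "even u \<noteq> even v"
    using splits_edge[OF assms(6)] by blast
  have l: "length as = tsize \<tau>" using len ts by simp
  have "fc.bad (fc.SL 0 \<tau> as)"
    by (rule fc.SL_bad[OF l mem uv])
  then have "kappa_tree lact \<kappa> \<tau> as = 0"
    by (rule fc.KZ[OF ne l mem])
  then show ?thesis by (simp add: as_def)
qed


end
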